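(* Let $E$ be a finite directed graph with no sinks, $Z$ a weight sequence and $p\ge1$. Then $Z$ satisfies Condition A(p) if and only if $u_\alpha z=zu_\alpha$ for every path $\alpha$ with $|\alpha|=p$. In that case also $u_\alpha^*z=zu_\alpha^*$ for every path $\alpha$ with $|\alpha|=p$.
   Context: Graph conventions: $E=(E^0,E^1,s,r)$ finite directed graph; paths $\alpha=e_1\cdots e_k$ with $s(e_j)=r(e_{j+1})$, $|\alpha|=k$. Fock setup: $A=C(E^0)$, $X_E$ the graph correspondence over $A$; $X_E^{\otimes k}$ has basis $\{\delta_\alpha:|\alpha|=k\}$ with $\delta_\alpha\otimes\delta_\beta=\delta_{\alpha\beta}$ if $s(\alpha)=r(\beta)$, else $0$. $\mathcal{F}(X_E)=\bigoplus_kX_E^{\otimes k}$, $\mathcal{K}$ compacts, $S_e\delta_\beta=\delta_{e\beta}$ (or $0$). Weight sequence $Z=\{Z_k\}$ ($Z_k$ adjointable on $X_E^{\otimes k}$, commuting with left $A$-action, $Z_0=I$, uniformly bounded, positive invertible, $Z_k\ge\epsilon I$ for $k\ge1$), $Z=\mathrm{diag}(Z_k)$; $q$ the quotient modulo $\mathcal{K}$; $u_e=q(S_e)$, $u_\alpha=u_{e_1}\cdots u_{e_k}$, $z=q(Z)$. Condition A(p): $\lim_{k\to\infty}\|I_p\otimes Z_k-Z_{k+p}\|=0$, where $(I_p\otimes Z_k)\delta_{\beta\gamma}=\delta_\beta\otimes Z_k\delta_\gamma$ for $|\beta|=p$, $|\gamma|=k$. *)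

theory Defs
  imports "HOL-Analysis.Analysis"
begin

text \<open>A path of length k is represented as a pair (v, es): es = [e1,...,ek] with
  s(e_j) = r(e_(j+1)) and v = s(ek) the source vertex; (v, []) is the vertex v
  (path of length 0). These index the canonical basis delta_alpha of the Fock module.\<close>

type_synonym ('v,'e) gpath = "'v \<times> 'e list"

definition is_path :: "('e \<Rightarrow> 'v) \<Rightarrow> ('e \<Rightarrow> 'v) \<Rightarrow> ('v,'e) gpath \<Rightarrow> bool" where
  "is_path s r \<alpha> = (snd \<alpha> = [] \<or>
     (fst \<alpha> = s (last (snd \<alpha>)) \<and>
      (\<forall>i. Suc i < length (snd \<alpha>) \<longrightarrow> s (snd \<alpha> ! i) = r (snd \<alpha> ! Suc i))))"

definition fock_paths :: "('e \<Rightarrow> 'v) \<Rightarrow> ('e \<Rightarrow> 'v) \<Rightarrow> ('v,'e) gpath set" where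
  "fock_paths s r = {\<alpha>. is_path s r \<alpha>}"

definition paths_len :: "('e \<Rightarrow> 'v) \<Rightarrow> ('e \<Rightarrow> 'v) \<Rightarrow> nat \<Rightarrow> ('v,'e) gpath set" where
  "paths_len s r k = {\<alpha> \<in> fock_paths s r. length (snd \<alpha>) = k}"

definition psrc :: "('v,'e) gpath \<Rightarrow> 'v" where
  "psrc \<alpha> = fst \<alpha>"

definition prange :: "('e \<Rightarrow> 'v) \<Rightarrow> ('v,'e) gpath \<Rightarrow> 'v" where
  "prange r \<alpha> = (if snd \<alpha> = [] then fst \<alpha> else r (hd (snd \<alpha>)))"

definition no_sinks :: "('e \<Rightarrow> 'v) \<Rightarrow> bool" where
  "no_sinks s = (\<forall>v. \<exists>e. s e = v)"

definition ell2 :: "'a set \<Rightarrow> ('a \<Rightarrow> complex) set" where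
  "ell2 P = {x. (\<forall>a. a \<notin> P \<longrightarrow> x a = 0) \<and> (\<lambda>a. (cmod (x a))\<^sup>2) summable_on P}"

definition norm2 :: "'a set \<Rightarrow> ('a \<Rightarrow> complex) \<Rightarrow> real" where
  "norm2 P x = sqrt (infsum (\<lambda>a. (cmod (x a))\<^sup>2) P)"

definition inner2 :: "'a set \<Rightarrow> ('a \<Rightarrow> complex) \<Rightarrow> ('a \<Rightarrow> complex) \<Rightarrow> complex" where
  "inner2 P x y = infsum (\<lambda>a. x a * cnj (y a)) P"

definition compact_op :: "'a set \<Rightarrow> (('a \<Rightarrow> complex) \<Rightarrow> ('a \<Rightarrow> complex)) \<Rightarrow> bool" where
  "compact_op P T = (\<forall>\<epsilon>>0. \<exists>F. finite F \<and> F \<subseteq> ell2 P \<and>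
      (\<forall>x\<in>ell2 P. norm2 P x \<le> 1 \<longrightarrow> (\<exists>y\<in>F. norm2 P (\<lambda>a. T x a - y a) < \<epsilon>)))"

definition is_adj :: "'a set \<Rightarrow> (('a \<Rightarrow> complex) \<Rightarrow> ('a \<Rightarrow> complex))
    \<Rightarrow> (('a \<Rightarrow> complex) \<Rightarrow> ('a \<Rightarrow> complex)) \<Rightarrow> bool" where
  "is_adj P T T' = ((\<forall>x\<in>ell2 P. T' x \<in> ell2 P) \<and>
      (\<forall>x\<in>ell2 P. \<forall>y\<in>ell2 P. inner2 P (T x) y = inner2 P x (T' y)))"

definition commutes_mod_compact :: "'a set \<Rightarrow> (('a \<Rightarrow> complex) \<Rightarrow> ('a \<Rightarrow> complex))
    \<Rightarrow> (('a \<Rightarrow> complex) \<Rightarrow> ('a \<Rightarrow> complex)) \<Rightarrow> bool" where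
  "commutes_mod_compact P T Z = compact_op P (\<lambda>x a. T (Z x) a - Z (T x) a)"

definition matop :: "'a set \<Rightarrow> ('a \<Rightarrow> 'a \<Rightarrow> complex) \<Rightarrow> ('a \<Rightarrow> complex) \<Rightarrow> ('a \<Rightarrow> complex)" where
  "matop S M x = (\<lambda>a. if a \<in> S then (\<Sum>b\<in>S. M a b * x b) else 0)"

definition fin_opnorm :: "'a set \<Rightarrow> ('a \<Rightarrow> 'a \<Rightarrow> complex) \<Rightarrow> real" where
  "fin_opnorm S M = Sup ((\<lambda>x. norm2 S (matop S M x)) ` {x \<in> ell2 S. norm2 S x \<le> 1})"

text \<open>Zm k alpha beta is the matrix entry of Z_k in the basis delta of X_E^{(tensor k)}.\<close>
definition weight_seq :: "('e::finite \<Rightarrow> 'v::finite) \<Rightarrow> ('e \<Rightarrow> 'v)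
    \<Rightarrow> (nat \<Rightarrow> ('v,'e) gpath \<Rightarrow> ('v,'e) gpath \<Rightarrow> complex) \<Rightarrow> bool" where
  "weight_seq s r Zm =
    ((\<forall>k \<alpha> \<beta>. Zm k \<alpha> \<beta> \<noteq> 0 \<longrightarrow> \<alpha> \<in> paths_len s r k \<and> \<beta> \<in> paths_len s r k
        \<and> psrc \<alpha> = psrc \<beta> \<and> prange r \<alpha> = prange r \<beta>)
     \<and> (\<forall>\<alpha> \<beta>. Zm 0 \<alpha> \<beta> = (if \<alpha> = \<beta> \<and> \<alpha> \<in> paths_len s r 0 then 1 else 0))
     \<and> (\<forall>k \<alpha> \<beta>. Zm k \<beta> \<alpha> = cnj (Zm k \<alpha> \<beta>))
     \<and> (\<exists>C. \<forall>k. fin_opnorm (paths_len s r k) (Zm k) \<le> C)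
     \<and> (\<exists>\<epsilon>>0. \<forall>k\<ge>1. \<forall>x.
          \<epsilon> * (\<Sum>\<alpha>\<in>paths_len s r k. (cmod (x \<alpha>))\<^sup>2)
          \<le> Re (\<Sum>\<alpha>\<in>paths_len s r k. \<Sum>\<beta>\<in>paths_len s r k. cnj (x \<alpha>) * Zm k \<alpha> \<beta> * x \<beta>)))"

text \<open>Matrix of I_p tensor Z_k on X_E^{(tensor (k+p))}.\<close>
definition tensorI :: "('e \<Rightarrow> 'v) \<Rightarrow> ('e \<Rightarrow> 'v) \<Rightarrow> nat
    \<Rightarrow> (nat \<Rightarrow> ('v,'e) gpath \<Rightarrow> ('v,'e) gpath \<Rightarrow> complex) \<Rightarrow> nat
    \<Rightarrow> ('v,'e) gpath \<Rightarrow> ('v,'e) gpath \<Rightarrow> complex" where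
  "tensorI s r p Zm k \<alpha> \<beta> =
    (if \<alpha> \<in> paths_len s r (k + p) \<and> \<beta> \<in> paths_len s r (k + p) \<and> take p (snd \<alpha>) = take p (snd \<beta>)
     then Zm k (fst \<alpha>, drop p (snd \<alpha>)) (fst \<beta>, drop p (snd \<beta>)) else 0)"

definition condA :: "('e \<Rightarrow> 'v) \<Rightarrow> ('e \<Rightarrow> 'v)
    \<Rightarrow> (nat \<Rightarrow> ('v,'e) gpath \<Rightarrow> ('v,'e) gpath \<Rightarrow> complex) \<Rightarrow> nat \<Rightarrow> bool" where
  "condA s r Zm p =
    ((\<lambda>k. fin_opnorm (paths_len s r (k + p)) (\<lambda>\<alpha> \<beta>. tensorI s r p Zm k \<alpha> \<beta> - Zm (k + p) \<alpha> \<beta>))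
      \<longlonglongrightarrow> 0)"

definition Zop :: "('e \<Rightarrow> 'v) \<Rightarrow> ('e \<Rightarrow> 'v) \<Rightarrow> (nat \<Rightarrow> ('v,'e) gpath \<Rightarrow> ('v,'e) gpath \<Rightarrow> complex)
    \<Rightarrow> (('v,'e) gpath \<Rightarrow> complex) \<Rightarrow> (('v,'e) gpath \<Rightarrow> complex)" where
  "Zop s r Zm x = (\<lambda>\<alpha>. if \<alpha> \<in> fock_paths s r
      then (\<Sum>\<beta>\<in>paths_len s r (length (snd \<alpha>)). Zm (length (snd \<alpha>)) \<alpha> \<beta> * x \<beta>) else 0)"

text \<open>Creation operator S_e: delta_beta maps to delta_(e beta) if s(e) = r(beta), else to 0.\<close>
definition Sedge :: "('e \<Rightarrow> 'v) \<Rightarrow> ('e \<Rightarrow> 'v) \<Rightarrow> 'e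
    \<Rightarrow> (('v,'e) gpath \<Rightarrow> complex) \<Rightarrow> (('v,'e) gpath \<Rightarrow> complex)" where
  "Sedge s r e x = (\<lambda>\<gamma>. if \<gamma> \<in> fock_paths s r then
      (case snd \<gamma> of [] \<Rightarrow> 0 | e' # es \<Rightarrow> if e' = e then x (fst \<gamma>, es) else 0) else 0)"

definition Spath :: "('e \<Rightarrow> 'v) \<Rightarrow> ('e \<Rightarrow> 'v) \<Rightarrow> 'e list
    \<Rightarrow> (('v,'e) gpath \<Rightarrow> complex) \<Rightarrow> (('v,'e) gpath \<Rightarrow> complex)" where
  "Spath s r es = foldr (\<lambda>e T. Sedge s r e \<circ> T) es id"

end

theory Submission
  imports Defs
begin


definition lev :: "'a set \<Rightarrow> ('a \<Rightarrow> nat) \<Rightarrow> nat \<Rightarrow> 'a set" where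
  "lev P lvl m = {a\<in>P. lvl a = m}"

definition nsq :: "'a set \<Rightarrow> ('a \<Rightarrow> complex) \<Rightarrow> real" where
  "nsq A x = (\<Sum>a\<in>A. (cmod (x a))\<^sup>2)"

definition kop :: "'a set \<Rightarrow> ('a \<Rightarrow> nat) \<Rightarrow> (nat \<Rightarrow> nat) \<Rightarrow> nat \<Rightarrow> ('a \<Rightarrow> 'a \<Rightarrow> complex)
    \<Rightarrow> ('a \<Rightarrow> complex) \<Rightarrow> ('a \<Rightarrow> complex)" where
  "kop P lvl \<sigma> m0 K x = (\<lambda>\<gamma>. if \<gamma> \<in> P \<and> lvl \<gamma> \<ge> m0
       then (\<Sum>b\<in>lev P lvl (\<sigma> (lvl \<gamma>)). K \<gamma> b * x b) else 0)"

lemma nsq_nonneg: "nsq A x \<ge> 0"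
  unfolding nsq_def by (simp add: sum_nonneg)

lemma nsq_L2: "sqrt (nsq A x) = L2_set (\<lambda>a. cmod (x a)) A"
  unfolding nsq_def L2_set_def by simp

lemma nsq_triangle:
  "sqrt (nsq A (\<lambda>a. x a + y a)) \<le> sqrt (nsq A x) + sqrt (nsq A y)"
proof -
  have "L2_set (\<lambda>a. cmod (x a + y a)) A \<le> L2_set (\<lambda>a. cmod (x a) + cmod (y a)) A"
    by (rule L2_set_mono) (auto simp: norm_triangle_ineq)
  also have "\<dots> \<le> L2_set (\<lambda>a. cmod (x a)) A + L2_set (\<lambda>a. cmod (y a)) A"
    by (rule L2_set_triangle_ineq)
  finally show ?thesis by (simp add: nsq_L2)
qed

lemma nsq_sum_triangle:
  assumes "finite I"
  shows "sqrt (nsq A (\<lambda>a. \<Sum>i\<in>I. f i a)) \<le> (\<Sum>i\<in>I. sqrt (nsq A (f i)))"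
  using assms
proof (induction I rule: finite_induct)
  case empty
  then show ?case by (simp add: nsq_def)
next
  case (insert i I)
  have "sqrt (nsq A (\<lambda>a. \<Sum>j\<in>insert i I. f j a)) = sqrt (nsq A (\<lambda>a. f i a + (\<Sum>j\<in>I. f j a)))"
    using insert by simp
  also have "\<dots> \<le> sqrt (nsq A (f i)) + sqrt (nsq A (\<lambda>a. \<Sum>j\<in>I. f j a))"
    by (rule nsq_triangle)
  also have "\<dots> \<le> sqrt (nsq A (f i)) + (\<Sum>j\<in>I. sqrt (nsq A (f j)))"
    using insert by simp
  finally show ?case using insert by simp
qed

lemma infsum_bound:
  fixes f :: "'a \<Rightarrow> real"
  assumes "\<And>a. a \<in> A \<Longrightarrow> f a \<ge> 0"
    and "\<And>F. finite F \<Longrightarrow> F \<subseteq> A \<Longrightarrow> sum f F \<le> B"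
  shows "f summable_on A \<and> infsum f A \<le> B"
proof -
  have "f summable_on A"
    by (rule nonneg_bdd_above_summable_on) (use assms in \<open>auto intro!: bdd_aboveI2[where M=B]\<close>)
  then show ?thesis using infsum_le_finite_sums assms by blast
qed

lemma ell2_sum_le:
  assumes "x \<in> ell2 P" "finite F" "F \<subseteq> P"
  shows "nsq F x \<le> infsum (\<lambda>a. (cmod (x a))\<^sup>2) P"
  unfolding nsq_def
  by (rule finite_sum_le_infsum) (use assms in \<open>auto simp: ell2_def\<close>)

lemma ell2_infsum_nonneg: "infsum (\<lambda>a. (cmod (x a))\<^sup>2) P \<ge> 0"
  by (rule infsum_nonneg) auto

lemma ell2_finite_supp:
  assumes "finite A" "A \<subseteq> P" "\<And>a. a \<notin> A \<Longrightarrow> x a = 0"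
  shows "x \<in> ell2 P"
proof -
  have "(\<lambda>a. (cmod (x a))\<^sup>2) summable_on A" using assms by simp
  then have "(\<lambda>a. (cmod (x a))\<^sup>2) summable_on P"
    by (subst summable_on_cong_neutral[where T=A and g="\<lambda>a. (cmod (x a))\<^sup>2"]) (use assms in auto)
  then show ?thesis using assms unfolding ell2_def by auto
qed

lemma ell2_finite_infsum:
  assumes "finite A" "A \<subseteq> P" "\<And>a. a \<notin> A \<Longrightarrow> x a = 0"
  shows "infsum (\<lambda>a. (cmod (x a))\<^sup>2) P = nsq A x"
proof -
  have "infsum (\<lambda>a. (cmod (x a))\<^sup>2) P = infsum (\<lambda>a. (cmod (x a))\<^sup>2) A"
    by (rule infsum_cong_neutral) (use assms in auto)
  then show ?thesis using assms by (simp add: nsq_def)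
qed

lemma ell2_diff:
  assumes "x \<in> ell2 P" "y \<in> ell2 P"
  shows "(\<lambda>a. x a - y a) \<in> ell2 P"
proof -
  have sx: "(\<lambda>a. (cmod (x a))\<^sup>2) summable_on P" and sy: "(\<lambda>a. (cmod (y a))\<^sup>2) summable_on P"
    using assms by (auto simp: ell2_def)
  have "(\<lambda>a. 2 * (cmod (x a))\<^sup>2 + 2 * (cmod (y a))\<^sup>2) summable_on P"
    using sx sy by (intro summable_on_add summable_on_cmult_right) auto
  moreover have "(cmod (x a - y a))\<^sup>2 \<le> 2 * (cmod (x a))\<^sup>2 + 2 * (cmod (y a))\<^sup>2" for a
  proof -
    have "cmod (x a - y a) \<le> cmod (x a) + cmod (y a)" by (rule norm_triangle_ineq4)
    then have "(cmod (x a - y a))\<^sup>2 \<le> (cmod (x a) + cmod (y a))\<^sup>2"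
      by (intro power_mono) auto
    also have "\<dots> \<le> 2 * (cmod (x a))\<^sup>2 + 2 * (cmod (y a))\<^sup>2"
      using power2_diff[of "cmod (x a)" "cmod (y a)"] power2_sum[of "cmod (x a)" "cmod (y a)"]
        zero_le_power2[of "cmod (x a) - cmod (y a)"] by linarith
    finally show ?thesis .
  qed
  ultimately have "(\<lambda>a. (cmod (x a - y a))\<^sup>2) summable_on P"
    by (rule summable_on_comparison_test) auto
  then show ?thesis using assms by (auto simp: ell2_def)
qed


lemma lev_disj: "m \<noteq> m' \<Longrightarrow> lev P lvl m \<inter> lev P lvl m' = {}"
  unfolding lev_def by auto

lemma lev_sub: "lev P lvl m \<subseteq> P"
  unfolding lev_def by auto

lemma nsq_union:
  assumes "finite M" "\<And>m. finite (lev P lvl m)"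
  shows "(\<Sum>m\<in>M. nsq (lev P lvl m) x) = nsq (\<Union>m\<in>M. lev P lvl m) x"
  unfolding nsq_def
  by (rule sum.UNION_disjoint[symmetric]) (use assms in \<open>auto simp: lev_def\<close>)

lemma kop_outside: "\<gamma> \<notin> P \<Longrightarrow> kop P lvl \<sigma> m0 K x \<gamma> = 0"
  by (simp add: kop_def)

lemma kop_low: "lvl \<gamma> < m0 \<Longrightarrow> kop P lvl \<sigma> m0 K x \<gamma> = 0"
  by (simp add: kop_def)

lemma kop_diff: "kop P lvl \<sigma> m0 K (\<lambda>a. x a - y a) \<gamma> = kop P lvl \<sigma> m0 K x \<gamma> - kop P lvl \<sigma> m0 K y \<gamma>"
  by (simp add: kop_def sum_subtractf ring_distribs)

lemma kop_scale: "kop P lvl \<sigma> m0 K (\<lambda>a. c * x a) \<gamma> = c * kop P lvl \<sigma> m0 K x \<gamma>"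
  by (simp add: kop_def sum_distrib_left algebra_simps)

lemma kop_local:
  assumes "\<gamma> \<in> lev P lvl m" "\<And>a. a \<in> lev P lvl (\<sigma> m) \<Longrightarrow> x a = y a"
  shows "kop P lvl \<sigma> m0 K x \<gamma> = kop P lvl \<sigma> m0 K y \<gamma>"
  using assms by (auto simp: kop_def lev_def intro!: sum.cong)

lemma kop_zero:
  assumes "\<gamma> \<in> lev P lvl m" "\<And>a. a \<in> lev P lvl (\<sigma> m) \<Longrightarrow> x a = 0"
  shows "kop P lvl \<sigma> m0 K x \<gamma> = 0"
  using assms by (auto simp: kop_def lev_def intro!: sum.neutral)

lemma kop_sum_le:
  assumes fin: "\<And>m. finite (lev P lvl m)" and S: "finite S" "S \<subseteq> P"
  shows "(\<Sum>a\<in>S. (cmod (kop P lvl \<sigma> m0 K x a))\<^sup>2)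
     \<le> (\<Sum>m\<in>lvl ` S \<inter> {m0..}. nsq (lev P lvl m) (kop P lvl \<sigma> m0 K x))"
proof -
  let ?f = "\<lambda>a. (cmod (kop P lvl \<sigma> m0 K x a))\<^sup>2"
  let ?M = "lvl ` S \<inter> {m0..}"
  have "(\<Sum>a\<in>S. ?f a) = (\<Sum>a\<in>S \<inter> {a. lvl a \<ge> m0}. ?f a)"
    by (rule sum.mono_neutral_right) (use S in \<open>auto simp: kop_low not_le\<close>)
  also have "\<dots> \<le> (\<Sum>a\<in>(\<Union>m\<in>?M. lev P lvl m). ?f a)"
    by (rule sum_mono2) (use S fin in \<open>auto simp: lev_def\<close>)
  also have "\<dots> = (\<Sum>m\<in>?M. nsq (lev P lvl m) (kop P lvl \<sigma> m0 K x))"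
    using nsq_union[OF _ fin, of ?M "kop P lvl \<sigma> m0 K x"] S by (simp add: nsq_def)
  finally show ?thesis .
qed

lemma levels_le:
  assumes fin: "\<And>m. finite (lev P lvl m)" and inj: "inj_on \<sigma> {m0..}"
    and M: "finite M" "M \<subseteq> {m0..}" and x: "x \<in> ell2 P"
  shows "(\<Sum>m\<in>M. nsq (lev P lvl (\<sigma> m)) x) \<le> infsum (\<lambda>a. (cmod (x a))\<^sup>2) P"
proof -
  have ij: "inj_on \<sigma> M" by (rule inj_on_subset[OF inj M(2)])
  have "(\<Sum>m\<in>M. nsq (lev P lvl (\<sigma> m)) x) = (\<Sum>j\<in>\<sigma> ` M. nsq (lev P lvl j) x)"
    by (simp add: sum.reindex[OF ij])
  also have "\<dots> = nsq (\<Union>j\<in>\<sigma> ` M. lev P lvl j) x"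
    by (rule nsq_union) (use M fin in auto)
  also have "\<dots> \<le> infsum (\<lambda>a. (cmod (x a))\<^sup>2) P"
    by (rule ell2_sum_le[OF x]) (use M fin in \<open>auto simp: lev_def\<close>)
  finally show ?thesis .
qed

lemma kop_ell2:
  assumes fin: "\<And>m. finite (lev P lvl m)" and inj: "inj_on \<sigma> {m0..}"
    and bnd: "\<And>x m. m \<ge> m0 \<Longrightarrow> nsq (lev P lvl m) (kop P lvl \<sigma> m0 K x) \<le> B\<^sup>2 * nsq (lev P lvl (\<sigma> m)) x"
    and x: "x \<in> ell2 P"
  shows "kop P lvl \<sigma> m0 K x \<in> ell2 P"
proof -
  let ?I = "infsum (\<lambda>a. (cmod (x a))\<^sup>2) P"
  have "(\<lambda>a. (cmod (kop P lvl \<sigma> m0 K x a))\<^sup>2) summable_on P \<and>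
        infsum (\<lambda>a. (cmod (kop P lvl \<sigma> m0 K x a))\<^sup>2) P \<le> B\<^sup>2 * ?I"
  proof (rule infsum_bound)
    fix S assume S: "finite S" "S \<subseteq> P"
    have "(\<Sum>a\<in>S. (cmod (kop P lvl \<sigma> m0 K x a))\<^sup>2)
       \<le> (\<Sum>m\<in>lvl ` S \<inter> {m0..}. nsq (lev P lvl m) (kop P lvl \<sigma> m0 K x))"
      by (rule kop_sum_le[OF fin S])
    also have "\<dots> \<le> (\<Sum>m\<in>lvl ` S \<inter> {m0..}. B\<^sup>2 * nsq (lev P lvl (\<sigma> m)) x)"
      by (rule sum_mono) (use bnd in auto)
    also have "\<dots> = B\<^sup>2 * (\<Sum>m\<in>lvl ` S \<inter> {m0..}. nsq (lev P lvl (\<sigma> m)) x)"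
      by (simp add: sum_distrib_left)
    also have "\<dots> \<le> B\<^sup>2 * ?I"
      by (rule mult_left_mono[OF levels_le[OF fin inj _ _ x]]) (use S in auto)
    finally show "(\<Sum>a\<in>S. (cmod (kop P lvl \<sigma> m0 K x a))\<^sup>2) \<le> B\<^sup>2 * ?I" .
  qed auto
  then show ?thesis by (auto simp: ell2_def kop_outside)
qed




lemma kop_compact:
  fixes b :: "nat \<Rightarrow> real"
  assumes fin: "\<And>m. finite (lev P lvl m)" and inj: "inj_on \<sigma> {m0..}"
    and bnd: "\<And>x m. m \<ge> m0 \<Longrightarrow> nsq (lev P lvl m) (kop P lvl \<sigma> m0 K x) \<le> (b m)\<^sup>2 * nsq (lev P lvl (\<sigma> m)) x"
    and lim: "b \<longlonglongrightarrow> 0"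
  shows "compact_op P (kop P lvl \<sigma> m0 K)"
proof -
  let ?T = "kop P lvl \<sigma> m0 K"
  obtain B where B: "\<And>m. norm (b m) \<le> B"
  proof -
    have "Bseq b" using convergent_imp_Bseq[of b] lim unfolding convergent_def by blast
    then show ?thesis using that by (metis BseqE real_norm_def)
  qed
  have bndB: "nsq (lev P lvl m) (?T x) \<le> B\<^sup>2 * nsq (lev P lvl (\<sigma> m)) x" if "m \<ge> m0" for x m
  proof -
    have "(b m)\<^sup>2 \<le> B\<^sup>2" using B[of m] by (simp add: abs_le_square_iff[symmetric])
    then show ?thesis using bnd[OF that, of x] nsq_nonneg[of "lev P lvl (\<sigma> m)" x]
      by (meson mult_right_mono order_trans)
  qed
  show ?thesis unfolding compact_op_def
  proof (intro allI impI)
    fix \<epsilon> :: real assume e: "\<epsilon> > 0"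
    have "\<exists>no. \<forall>n\<ge>no. norm (b n - 0) < \<epsilon>/2" using lim e unfolding LIMSEQ_iff by (meson half_gt_zero)
    then obtain N0 where N0: "\<And>m. m \<ge> N0 \<Longrightarrow> \<bar>b m\<bar> < \<epsilon>/2" by auto
    define N where "N = max N0 m0"
    define Lo where "Lo = {m0..<N}"
    define Ilo where "Ilo = (\<Union>m\<in>Lo. lev P lvl (\<sigma> m))"
    have finIlo: "finite Ilo" unfolding Ilo_def Lo_def by (intro finite_UN_I finite_atLeastLessThan fin)
    have IloP: "Ilo \<subseteq> P" unfolding Ilo_def by (auto simp: lev_def)
    define Kc where "Kc = (\<Sum>m\<in>Lo. (b m)\<^sup>2 * real (card (lev P lvl (\<sigma> m))))"
    have Kc0: "Kc \<ge> 0" unfolding Kc_def by (intro sum_nonneg) simp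
    define \<eta> where "\<eta> = \<epsilon> / (2 * sqrt (Kc + 1))"
    have eta0: "\<eta> > 0" unfolding \<eta>_def using e Kc0 by auto
    have eta2: "\<eta>\<^sup>2 = \<epsilon>\<^sup>2 / (4 * (Kc + 1))"
      unfolding \<eta>_def using Kc0 by (simp add: power_divide power_mult_distrib)
    have Kceta: "Kc * \<eta>\<^sup>2 \<le> \<epsilon>\<^sup>2 / 4"
    proof -
      have "(Kc + 1) * \<eta>\<^sup>2 = \<epsilon>\<^sup>2 / 4" unfolding eta2 using Kc0 by (simp add: field_simps)
      moreover have "Kc * \<eta>\<^sup>2 \<le> (Kc + 1) * \<eta>\<^sup>2" by (rule mult_right_mono) auto
      ultimately show ?thesis by simp
    qed
    have "compact (cball (0::complex) 1)" by (rule compact_cball)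
    then have "\<exists>k. finite k \<and> cball (0::complex) 1 \<subseteq> (\<Union>x\<in>k. ball x \<eta>)"
      using eta0 unfolding compact_eq_totally_bounded by auto
    then obtain G where G: "finite G" "cball (0::complex) 1 \<subseteq> (\<Union>g\<in>G. ball g \<eta>)"
      by auto
    define ext where "ext g = (\<lambda>a. if a \<in> Ilo then g a else (0::complex))" for g :: "'a \<Rightarrow> complex"
    define F where "F = (\<lambda>g. ?T (ext g)) ` (PiE Ilo (\<lambda>_. G))"
    have "finite F" unfolding F_def using finIlo G(1) by (auto intro!: finite_PiE)
    moreover have "F \<subseteq> ell2 P"
    proof
      fix y assume "y \<in> F"
      then obtain g where y: "y = ?T (ext g)" unfolding F_def by auto
      have "ext g \<in> ell2 P"
        by (rule ell2_finite_supp[OF finIlo IloP]) (auto simp: ext_def)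
      note kk = kop_ell2[OF fin inj bndB this]
      then show "y \<in> ell2 P" unfolding y .
    qed
    moreover have "\<exists>y\<in>F. norm2 P (\<lambda>a. ?T x a - y a) < \<epsilon>" if x: "x \<in> ell2 P" "norm2 P x \<le> 1" for x
    proof -
      define I where "I = infsum (\<lambda>a. (cmod (x a))\<^sup>2) P"
      have I0: "I \<ge> 0" unfolding I_def by (rule ell2_infsum_nonneg)
      have I1: "I \<le> 1" using x(2) I0 unfolding norm2_def I_def[symmetric] by simp
      have xa: "cmod (x a) \<le> 1" if "a \<in> Ilo" for a
      proof -
        have "nsq {a} x \<le> I" unfolding I_def by (rule ell2_sum_le[OF x(1)]) (use that IloP in auto)
        then have "(cmod (x a))\<^sup>2 \<le> 1" using I1 by (simp add: nsq_def)
        then show ?thesis using power2_le_imp_le[of "cmod (x a)" 1] by simp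
      qed
      have "\<forall>a\<in>Ilo. \<exists>g. g \<in> G \<and> cmod (x a - g) < \<eta>"
      proof
        fix a assume "a \<in> Ilo"
        then have "x a \<in> cball 0 1" using xa by (simp add: dist_norm)
        then obtain g where "g \<in> G" "x a \<in> ball g \<eta>" using G(2) by blast
        then show "\<exists>g. g \<in> G \<and> cmod (x a - g) < \<eta>" by (auto simp: dist_norm norm_minus_commute)
      qed
      from bchoice[OF this] obtain g0 where g0': "\<forall>a\<in>Ilo. g0 a \<in> G \<and> cmod (x a - g0 a) < \<eta>"
        by blast
      then have g0: "\<And>a. a \<in> Ilo \<Longrightarrow> g0 a \<in> G \<and> cmod (x a - g0 a) < \<eta>" by blast
      have extr: "ext (restrict g0 Ilo) = ext g0" unfolding ext_def by auto
      have yF: "?T (ext g0) \<in> F"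
        unfolding F_def using g0 extr by (auto intro!: image_eqI[where x="restrict g0 Ilo"])
      define w where "w = (\<lambda>a. x a - ext g0 a)"
      have Tw: "?T x a - ?T (ext g0) a = ?T w a" for a unfolding w_def by (simp add: kop_diff)
      have main: "(\<lambda>a. (cmod (?T w a))\<^sup>2) summable_on P \<and> infsum (\<lambda>a. (cmod (?T w a))\<^sup>2) P \<le> \<epsilon>\<^sup>2 / 2"
      proof (rule infsum_bound)
        fix S assume S: "finite S" "S \<subseteq> P"
        define M where "M = lvl ` S \<inter> {m0..}"
        have finM: "finite M" unfolding M_def using S by auto
        have "(\<Sum>a\<in>S. (cmod (?T w a))\<^sup>2) \<le> (\<Sum>m\<in>M. nsq (lev P lvl m) (?T w))"
          unfolding M_def by (rule kop_sum_le[OF fin S])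
        also have "\<dots> \<le> (\<Sum>m\<in>M. (b m)\<^sup>2 * nsq (lev P lvl (\<sigma> m)) w)"
          by (rule sum_mono) (use bnd in \<open>auto simp: M_def\<close>)
        also have "\<dots> = (\<Sum>m\<in>M \<inter> Lo. (b m)\<^sup>2 * nsq (lev P lvl (\<sigma> m)) w)
                       + (\<Sum>m\<in>M - Lo. (b m)\<^sup>2 * nsq (lev P lvl (\<sigma> m)) w)"
          by (rule sum.Int_Diff[OF finM])
        also have "\<dots> \<le> Kc * \<eta>\<^sup>2 + (\<epsilon>/2)\<^sup>2 * I"
        proof (rule add_mono)
          have "(\<Sum>m\<in>M \<inter> Lo. (b m)\<^sup>2 * nsq (lev P lvl (\<sigma> m)) w)
               \<le> (\<Sum>m\<in>M \<inter> Lo. (b m)\<^sup>2 * (real (card (lev P lvl (\<sigma> m))) * \<eta>\<^sup>2))"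
          proof (rule sum_mono)
            fix m assume m: "m \<in> M \<inter> Lo"
            have "nsq (lev P lvl (\<sigma> m)) w \<le> (\<Sum>a\<in>lev P lvl (\<sigma> m). \<eta>\<^sup>2)"
              unfolding nsq_def
            proof (rule sum_mono)
              fix a assume a: "a \<in> lev P lvl (\<sigma> m)"
              then have "a \<in> Ilo" using m unfolding Ilo_def by auto
              then have "cmod (w a) < \<eta>" using g0 unfolding w_def ext_def by auto
              then show "(cmod (w a))\<^sup>2 \<le> \<eta>\<^sup>2" by (intro power_mono) auto
            qed
            then show "(b m)\<^sup>2 * nsq (lev P lvl (\<sigma> m)) w \<le> (b m)\<^sup>2 * (real (card (lev P lvl (\<sigma> m))) * \<eta>\<^sup>2)"
              by (intro mult_left_mono) auto
          qed
          also have "\<dots> \<le> (\<Sum>m\<in>Lo. (b m)\<^sup>2 * (real (card (lev P lvl (\<sigma> m))) * \<eta>\<^sup>2))"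
            by (rule sum_mono2) (auto simp: Lo_def)
          also have "\<dots> = Kc * \<eta>\<^sup>2" unfolding Kc_def sum_distrib_right by (rule sum.cong) (simp_all add: mult.assoc)
          finally show "(\<Sum>m\<in>M \<inter> Lo. (b m)\<^sup>2 * nsq (lev P lvl (\<sigma> m)) w) \<le> Kc * \<eta>\<^sup>2" .
        next
          have "(\<Sum>m\<in>M - Lo. (b m)\<^sup>2 * nsq (lev P lvl (\<sigma> m)) w)
              \<le> (\<Sum>m\<in>M - Lo. (\<epsilon>/2)\<^sup>2 * nsq (lev P lvl (\<sigma> m)) x)"
          proof (rule sum_mono)
            fix m assume m: "m \<in> M - Lo"
            then have mN: "m \<ge> N" "m \<ge> m0" unfolding M_def Lo_def by auto
            have "nsq (lev P lvl (\<sigma> m)) w = nsq (lev P lvl (\<sigma> m)) x"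
              unfolding nsq_def
            proof (rule sum.cong[OF refl])
              fix a assume a: "a \<in> lev P lvl (\<sigma> m)"
              have "a \<notin> Ilo"
              proof
                assume "a \<in> Ilo"
                then obtain m' where m': "m' \<in> Lo" "a \<in> lev P lvl (\<sigma> m')" unfolding Ilo_def by auto
                then have "\<sigma> m = \<sigma> m'" using a by (auto simp: lev_def)
                moreover have "m' \<in> {m0..}" "m \<in> {m0..}" using m' mN by (auto simp: Lo_def)
                ultimately have "m = m'" using inj by (auto dest: inj_onD)
                then show False using m' mN by (auto simp: Lo_def)
              qed
              then show "(cmod (w a))\<^sup>2 = (cmod (x a))\<^sup>2" unfolding w_def ext_def by simp
            qed
            moreover have "(b m)\<^sup>2 \<le> (\<epsilon>/2)\<^sup>2"
              using N0[of m] mN unfolding N_def by (simp add: abs_le_square_iff[symmetric])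
            ultimately show "(b m)\<^sup>2 * nsq (lev P lvl (\<sigma> m)) w \<le> (\<epsilon>/2)\<^sup>2 * nsq (lev P lvl (\<sigma> m)) x"
              by (simp add: mult_right_mono nsq_nonneg)
          qed
          also have "\<dots> = (\<epsilon>/2)\<^sup>2 * (\<Sum>m\<in>M - Lo. nsq (lev P lvl (\<sigma> m)) x)"
            by (simp add: sum_distrib_left)
          also have "\<dots> \<le> (\<epsilon>/2)\<^sup>2 * I"
            unfolding I_def by (rule mult_left_mono[OF levels_le[OF fin inj _ _ x(1)]]) (use finM in \<open>auto simp: M_def\<close>)
          finally show "(\<Sum>m\<in>M - Lo. (b m)\<^sup>2 * nsq (lev P lvl (\<sigma> m)) w) \<le> (\<epsilon>/2)\<^sup>2 * I" .
        qed
        also have "\<dots> \<le> \<epsilon>\<^sup>2/4 + (\<epsilon>/2)\<^sup>2 * 1"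
          by (rule add_mono[OF Kceta]) (use mult_left_le[OF I1, of "(\<epsilon>/2)\<^sup>2"] in simp)
        also have "\<dots> = \<epsilon>\<^sup>2 / 2" by (simp add: power_divide)
        finally show "(\<Sum>a\<in>S. (cmod (?T w a))\<^sup>2) \<le> \<epsilon>\<^sup>2 / 2" .
      qed auto
      have "norm2 P (\<lambda>a. ?T x a - ?T (ext g0) a) = sqrt (infsum (\<lambda>a. (cmod (?T w a))\<^sup>2) P)"
        unfolding norm2_def Tw ..
      also have "\<dots> \<le> sqrt (\<epsilon>\<^sup>2 / 2)" using main by simp
      also have "\<dots> < sqrt (\<epsilon>\<^sup>2)" by (rule real_sqrt_less_mono) (use e in simp)
      also have "\<dots> = \<epsilon>" using e by simp
      finally show ?thesis using yF by blast
    qed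
    ultimately show "\<exists>F. finite F \<and> F \<subseteq> ell2 P \<and>
      (\<forall>x\<in>ell2 P. norm2 P x \<le> 1 \<longrightarrow> (\<exists>y\<in>F. norm2 P (\<lambda>a. ?T x a - y a) < \<epsilon>))" by blast
  qed
qed




lemma sqrt_lt_sq: assumes "t \<ge> 0" "c \<ge> 0" "sqrt t < c" shows "t < c\<^sup>2"
proof -
  have "sqrt t < sqrt (c\<^sup>2)" using assms by simp
  then show ?thesis by (simp only: real_sqrt_less_iff)
qed

lemma kop_small:
  assumes fin: "\<And>m. finite (lev P lvl m)" and inj: "inj_on \<sigma> {m0..}"
    and cpt: "compact_op P (kop P lvl \<sigma> m0 K)" and d: "\<delta> > 0"
  shows "\<exists>N. \<forall>m\<ge>N. \<forall>x. nsq (lev P lvl m) (kop P lvl \<sigma> m0 K x) \<le> \<delta>\<^sup>2 * nsq (lev P lvl (\<sigma> m)) x"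
proof (rule ccontr)
  let ?T = "kop P lvl \<sigma> m0 K"
  assume nc: "\<not> ?thesis"
  define Bad where "Bad = {m. \<exists>x. nsq (lev P lvl m) (?T x) > \<delta>\<^sup>2 * nsq (lev P lvl (\<sigma> m)) x}"
  have "\<forall>N. \<exists>m\<ge>N. m \<in> Bad" using nc unfolding Bad_def by (auto simp: not_le)
  then have infB: "infinite Bad" using infinite_nat_iff_unbounded_le by blast
  have Bm0: "m \<ge> m0" if mB: "m \<in> Bad" for m
  proof (rule ccontr)
    assume "\<not> m \<ge> m0"
    then have z: "nsq (lev P lvl m) (?T x) = 0" for x
      unfolding nsq_def by (auto simp: kop_low lev_def intro!: sum.neutral)
    obtain x where xb: "nsq (lev P lvl m) (?T x) > \<delta>\<^sup>2 * nsq (lev P lvl (\<sigma> m)) x"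
      using mB unfolding Bad_def by blast
    have "\<delta>\<^sup>2 * nsq (lev P lvl (\<sigma> m)) x \<ge> 0" by (simp add: nsq_nonneg)
    then show False using z[of x] xb by linarith
  qed
  define X where "X m = (SOME x. nsq (lev P lvl m) (?T x) > \<delta>\<^sup>2 * nsq (lev P lvl (\<sigma> m)) x)" for m
  have X: "nsq (lev P lvl m) (?T (X m)) > \<delta>\<^sup>2 * nsq (lev P lvl (\<sigma> m)) (X m)" if "m \<in> Bad" for m
    using that unfolding Bad_def X_def by (metis (mono_tags, lifting) mem_Collect_eq someI_ex)
  define n where "n m = nsq (lev P lvl (\<sigma> m)) (X m)" for m
  have npos: "n m > 0" if m: "m \<in> Bad" for m
  proof (rule ccontr)
    assume "\<not> n m > 0"
    then have "n m = 0" using nsq_nonneg[of "lev P lvl (\<sigma> m)" "X m"] unfolding n_def by linarith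
    then have "\<forall>a\<in>lev P lvl (\<sigma> m). (cmod (X m a))\<^sup>2 = 0"
      unfolding n_def nsq_def by (subst sum_nonneg_eq_0_iff[symmetric]) (use fin in auto)
    then have "\<And>a. a \<in> lev P lvl (\<sigma> m) \<Longrightarrow> X m a = 0" by auto
    then have "nsq (lev P lvl m) (?T (X m)) = 0"
      unfolding nsq_def by (auto intro!: sum.neutral kop_zero)
    then show False using X[OF m] \<open>n m = 0\<close> unfolding n_def by simp
  qed
  define xn where "xn m = (\<lambda>a. if a \<in> lev P lvl (\<sigma> m) then X m a / sqrt (n m) else 0)" for m
  have xn_ell2: "xn m \<in> ell2 P" for m
    by (rule ell2_finite_supp[OF fin lev_sub]) (auto simp: xn_def)
  have xn_norm: "norm2 P (xn m) \<le> 1" if "m \<in> Bad" for m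
  proof -
    have "infsum (\<lambda>a. (cmod (xn m a))\<^sup>2) P = nsq (lev P lvl (\<sigma> m)) (xn m)"
      by (rule ell2_finite_infsum[OF fin lev_sub]) (auto simp: xn_def)
    also have "\<dots> = (\<Sum>a\<in>lev P lvl (\<sigma> m). (cmod (X m a))\<^sup>2 / n m)"
      unfolding nsq_def xn_def using npos[OF that]
      by (intro sum.cong) (auto simp: norm_divide power_divide)
    also have "\<dots> = 1" using npos[OF that] unfolding n_def nsq_def
      by (simp add: sum_divide_distrib[symmetric])
    finally show ?thesis unfolding norm2_def by simp
  qed
  have Txn: "nsq (lev P lvl m) (?T (xn m)) > \<delta>\<^sup>2" if m: "m \<in> Bad" for m
  proof -
    have "?T (xn m) \<gamma> = (1 / sqrt (n m)) * ?T (X m) \<gamma>" if "\<gamma> \<in> lev P lvl m" for \<gamma>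
    proof -
      have "?T (xn m) \<gamma> = ?T (\<lambda>a. (1 / sqrt (n m)) * X m a) \<gamma>"
        by (rule kop_local[OF that]) (auto simp: xn_def)
      also have "\<dots> = (1 / sqrt (n m)) * ?T (X m) \<gamma>" by (rule kop_scale)
      finally show ?thesis .
    qed
    then have "nsq (lev P lvl m) (?T (xn m)) = (\<Sum>\<gamma>\<in>lev P lvl m. (cmod (?T (X m) \<gamma>))\<^sup>2 / n m)"
      unfolding nsq_def using npos[OF m]
      by (intro sum.cong) (auto simp: norm_mult norm_divide power_divide)
    also have "\<dots> = nsq (lev P lvl m) (?T (X m)) / n m"
      unfolding nsq_def by (simp add: sum_divide_distrib)
    also have "\<dots> > \<delta>\<^sup>2"
      using X[OF m] npos[OF m] unfolding n_def by (simp add: pos_less_divide_eq)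
    finally show ?thesis .
  qed
  have Tzero: "?T (xn m) \<gamma> = 0" if "m \<in> Bad" "m' \<in> Bad" "m \<noteq> m'" "\<gamma> \<in> lev P lvl m'" for m m' \<gamma>
  proof (rule kop_zero[OF that(4)])
    fix a assume a: "a \<in> lev P lvl (\<sigma> m')"
    have "\<sigma> m' \<noteq> \<sigma> m" using that Bm0 inj by (auto dest: inj_onD)
    then show "xn m a = 0" using a unfolding xn_def by (auto simp: lev_def)
  qed
  have Tell2: "?T (xn m) \<in> ell2 P" if m: "m \<in> Bad" for m
  proof (rule ell2_finite_supp[OF fin lev_sub])
    fix \<gamma> assume g: "\<gamma> \<notin> lev P lvl m"
    show "?T (xn m) \<gamma> = 0"
    proof (cases "\<gamma> \<in> P \<and> lvl \<gamma> \<ge> m0")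
      case True
      then have gl: "\<gamma> \<in> lev P lvl (lvl \<gamma>)" by (simp add: lev_def)
      have "\<sigma> (lvl \<gamma>) \<noteq> \<sigma> m" using g True Bm0[OF m] inj by (auto simp: lev_def dest: inj_onD)
      then show ?thesis by (intro kop_zero[OF gl]) (auto simp: xn_def lev_def)
    next
      case False
      then show ?thesis by (auto simp: kop_def)
    qed
  qed
  obtain F where F: "finite F" "F \<subseteq> ell2 P"
    "\<And>x. x \<in> ell2 P \<Longrightarrow> norm2 P x \<le> 1 \<Longrightarrow> \<exists>y\<in>F. norm2 P (\<lambda>a. ?T x a - y a) < \<delta>/3"
  proof -
    have d3: "\<delta>/3 > 0" using d by simp
    show ?thesis using cpt[unfolded compact_op_def, rule_format, OF d3] that by blast
  qed
  define Y where "Y m = (SOME y. y \<in> F \<and> norm2 P (\<lambda>a. ?T (xn m) a - y a) < \<delta>/3)" for m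
  have Y: "Y m \<in> F \<and> norm2 P (\<lambda>a. ?T (xn m) a - Y m a) < \<delta>/3" if "m \<in> Bad" for m
    unfolding Y_def by (rule someI_ex[of "\<lambda>y. y \<in> F \<and> norm2 P (\<lambda>a. ?T (xn m) a - y a) < \<delta>/3"]) (use F(3)[OF xn_ell2 xn_norm[OF that]] in blast)
  have "\<not> inj_on Y Bad"
  proof
    assume "inj_on Y Bad"
    moreover have "Y ` Bad \<subseteq> F" using Y by auto
    ultimately have "finite Bad" using F(1) by (meson finite_imageD finite_subset)
    then show False using infB by simp
  qed
  then obtain m m' where mm: "m \<in> Bad" "m' \<in> Bad" "m \<noteq> m'" "Y m = Y m'"
    unfolding inj_on_def by blast
  define y where "y = Y m"
  define B where "B = lev P lvl m'"
  have yell: "y \<in> ell2 P" using Y[OF mm(1)] F(2) unfolding y_def by auto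
  have close: "nsq B (\<lambda>a. ?T (xn k) a - y a) < (\<delta>/3)\<^sup>2" if k: "k \<in> Bad" "Y k = y" for k
  proof -
    let ?I = "infsum (\<lambda>a. (cmod (?T (xn k) a - y a))\<^sup>2) P"
    have "nsq B (\<lambda>a. ?T (xn k) a - y a) \<le> ?I"
      unfolding B_def by (rule ell2_sum_le[OF ell2_diff[OF Tell2[OF k(1)] yell] fin lev_sub])
    also have "?I < (\<delta>/3)\<^sup>2"
      using Y[OF k(1)] k(2) d unfolding norm2_def by (intro sqrt_lt_sq) (auto intro: infsum_nonneg)
    finally show ?thesis .
  qed
  have c1: "nsq B (\<lambda>a. - y a) < (\<delta>/3)\<^sup>2"
  proof -
    have "nsq B (\<lambda>a. ?T (xn m) a - y a) = nsq B (\<lambda>a. - y a)"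
      unfolding nsq_def B_def using Tzero[OF mm(1,2,3)] by (intro sum.cong) auto
    then show ?thesis using close[OF mm(1)] unfolding y_def by simp
  qed
  have c2: "nsq B (\<lambda>a. ?T (xn m') a - y a) < (\<delta>/3)\<^sup>2"
    using close[OF mm(2)] mm(4) unfolding y_def by simp
  have t1: "sqrt (nsq B (?T (xn m'))) \<le> sqrt (nsq B (\<lambda>a. ?T (xn m') a - y a)) + sqrt (nsq B y)"
    using nsq_triangle[of B "\<lambda>a. ?T (xn m') a - y a" y] by simp
  have t2: "sqrt (nsq B (\<lambda>a. ?T (xn m') a - y a)) < \<delta>/3"
    using real_sqrt_less_mono[OF c2] d by simp
  have "nsq B y = nsq B (\<lambda>a. - y a)" unfolding nsq_def by simp
  then have t3: "sqrt (nsq B y) < \<delta>/3"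
    using real_sqrt_less_mono[OF c1] d by simp
  have "sqrt (\<delta>\<^sup>2) < sqrt (nsq B (?T (xn m')))"
    using Txn[OF mm(2)] unfolding B_def by (rule real_sqrt_less_mono)
  then have t4: "\<delta> < sqrt (nsq B (?T (xn m')))" using d by simp
  show False using t1 t2 t3 t4 d by linarith
qed




lemma norm2_finite: "finite S \<Longrightarrow> norm2 S x = sqrt (nsq S x)"
  by (simp add: norm2_def nsq_def)

lemma ell2_finite_iff: "finite S \<Longrightarrow> x \<in> ell2 S \<longleftrightarrow> (\<forall>a. a \<notin> S \<longrightarrow> x a = 0)"
  by (auto simp: ell2_def)

lemma nsq_le_1_entry:
  assumes "finite S" "b \<in> S" "nsq S x \<le> 1"
  shows "cmod (x b) \<le> 1"
proof -
  have "(cmod (x b))\<^sup>2 \<le> nsq S x" unfolding nsq_def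
    by (rule member_le_sum) (use assms in auto)
  then have "(cmod (x b))\<^sup>2 \<le> 1\<^sup>2" using assms by simp
  then show ?thesis by (rule power2_le_imp_le) simp
qed

lemma matop_bdd:
  assumes S: "finite S"
  shows "bdd_above ((\<lambda>x. norm2 S (matop S M x)) ` {x \<in> ell2 S. norm2 S x \<le> 1})"
proof (rule bdd_aboveI2)
  fix x assume x: "x \<in> {x \<in> ell2 S. norm2 S x \<le> 1}"
  then have n1: "nsq S x \<le> 1" using S by (simp add: norm2_finite)
  define R where "R a = (\<Sum>b\<in>S. cmod (M a b))" for a
  have "nsq S (matop S M x) \<le> (\<Sum>a\<in>S. (R a)\<^sup>2)"
    unfolding nsq_def
  proof (rule sum_mono)
    fix a assume a: "a \<in> S"
    have "cmod (matop S M x a) \<le> (\<Sum>b\<in>S. cmod (M a b * x b))"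
      using a by (simp add: matop_def norm_sum)
    also have "\<dots> \<le> (\<Sum>b\<in>S. cmod (M a b))"
    proof (rule sum_mono)
      fix b assume "b \<in> S"
      then have "cmod (x b) \<le> 1" using nsq_le_1_entry[OF S _ n1] by simp
      then show "cmod (M a b * x b) \<le> cmod (M a b)"
        by (simp add: norm_mult mult_left_le)
    qed
    finally show "(cmod (matop S M x a))\<^sup>2 \<le> (R a)\<^sup>2" unfolding R_def
      by (intro power_mono) auto
  qed
  then show "norm2 S (matop S M x) \<le> sqrt (\<Sum>a\<in>S. (R a)\<^sup>2)"
    using S by (simp add: norm2_finite)
qed

lemma fin_opnorm_nonneg:
  assumes S: "finite S"
  shows "fin_opnorm S M \<ge> 0"
proof -
  have z: "(\<lambda>_. 0) \<in> {x \<in> ell2 S. norm2 S x \<le> 1}" using S by (simp add: ell2_finite_iff norm2_finite nsq_def)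
  have "norm2 S (matop S M (\<lambda>_. 0)) \<le> fin_opnorm S M"
    unfolding fin_opnorm_def by (rule cSup_upper[OF imageI[OF z] matop_bdd[OF S]])
  moreover have "norm2 S (matop S M (\<lambda>_. 0)) = 0" using S by (simp add: norm2_finite nsq_def matop_def)
  ultimately show ?thesis by simp
qed

lemma fin_opnorm_bound:
  assumes S: "finite S"
  shows "nsq S (matop S M x) \<le> (fin_opnorm S M)\<^sup>2 * nsq S x"
proof (cases "nsq S x = 0")
  case True
  then have "\<forall>a\<in>S. (cmod (x a))\<^sup>2 = 0"
    unfolding nsq_def by (subst sum_nonneg_eq_0_iff[symmetric]) (use S in auto)
  then have "matop S M x = (\<lambda>_. 0)" by (auto simp: matop_def intro!: sum.neutral)
  then show ?thesis using True by (simp add: nsq_def)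
next
  case False
  define t where "t = sqrt (nsq S x)"
  have t0: "t > 0" using False nsq_nonneg[of S x] unfolding t_def by simp
  define z where "z a = (if a \<in> S then x a / t else 0)" for a
  have zS: "z \<in> ell2 S" using S by (simp add: ell2_finite_iff z_def)
  have nz: "nsq S z = 1"
  proof -
    have "nsq S z = (\<Sum>a\<in>S. (cmod (x a))\<^sup>2 / t\<^sup>2)"
      unfolding nsq_def z_def using t0 by (intro sum.cong) (auto simp: norm_divide power_divide)
    also have "\<dots> = nsq S x / t\<^sup>2" unfolding nsq_def by (simp add: sum_divide_distrib)
    also have "\<dots> = 1" unfolding t_def using False nsq_nonneg[of S x] by simp
    finally show ?thesis .
  qed
  have zin: "z \<in> {x \<in> ell2 S. norm2 S x \<le> 1}" using zS nz S by (simp add: norm2_finite)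
  have le: "norm2 S (matop S M z) \<le> fin_opnorm S M"
    unfolding fin_opnorm_def by (rule cSup_upper[OF imageI[OF zin] matop_bdd[OF S]])
  have mz: "matop S M z a = matop S M x a / t" for a
    unfolding matop_def z_def by (auto simp: sum_divide_distrib intro!: sum.cong)
  have "nsq S (matop S M z) = nsq S (matop S M x) / t\<^sup>2"
    unfolding nsq_def mz using t0 by (simp add: norm_divide power_divide sum_divide_distrib)
  then have "sqrt (nsq S (matop S M x) / t\<^sup>2) \<le> fin_opnorm S M" using le S by (simp add: norm2_finite)
  then have "nsq S (matop S M x) / t\<^sup>2 \<le> (fin_opnorm S M)\<^sup>2"
    using real_sqrt_le_iff[of "nsq S (matop S M x) / t\<^sup>2" "(fin_opnorm S M)\<^sup>2"] fin_opnorm_nonneg[OF S]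
    by simp
  then have "nsq S (matop S M x) \<le> (fin_opnorm S M)\<^sup>2 * t\<^sup>2" using t0 by (simp add: pos_divide_le_eq)
  moreover have "t\<^sup>2 = nsq S x" unfolding t_def using nsq_nonneg[of S x] by simp
  ultimately show ?thesis by simp
qed

lemma fin_opnorm_le:
  assumes S: "finite S" and c: "c \<ge> 0" and b: "\<And>x. nsq S (matop S M x) \<le> c\<^sup>2 * nsq S x"
  shows "fin_opnorm S M \<le> c"
  unfolding fin_opnorm_def
proof (rule cSup_least)
  have z: "(\<lambda>_. 0) \<in> {x \<in> ell2 S. norm2 S x \<le> 1}" using S by (simp add: ell2_finite_iff norm2_finite nsq_def)
  then show "(\<lambda>x. norm2 S (matop S M x)) ` {x \<in> ell2 S. norm2 S x \<le> 1} \<noteq> {}" by blast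
next
  fix v assume "v \<in> (\<lambda>x. norm2 S (matop S M x)) ` {x \<in> ell2 S. norm2 S x \<le> 1}"
  then obtain x where x: "norm2 S x \<le> 1" "v = norm2 S (matop S M x)" by auto
  have n1: "nsq S x \<le> 1" using x S by (simp add: norm2_finite)
  have "v = sqrt (nsq S (matop S M x))" using x S by (simp add: norm2_finite)
  also have "\<dots> \<le> sqrt (c\<^sup>2 * nsq S x)" using b by simp
  also have "\<dots> \<le> sqrt (c\<^sup>2 * 1)"
    by (rule real_sqrt_le_mono, rule mult_left_mono[OF n1]) simp
  also have "\<dots> = c" using c by simp
  finally show "v \<le> c" .
qed




definition cat :: "'e list \<Rightarrow> ('v,'e) gpath \<Rightarrow> ('v,'e) gpath" where
  "cat es b = (fst b, es @ snd b)"
definition ptl :: "nat \<Rightarrow> ('v,'e) gpath \<Rightarrow> ('v,'e) gpath" where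
  "ptl p \<gamma> = (fst \<gamma>, drop p (snd \<gamma>))"
definition Sad :: "('e \<Rightarrow> 'v) \<Rightarrow> ('e \<Rightarrow> 'v) \<Rightarrow> 'e list \<Rightarrow> (('v,'e) gpath \<Rightarrow> complex) \<Rightarrow> (('v,'e) gpath \<Rightarrow> complex)" where
  "Sad s r es y = (\<lambda>\<beta>. if \<beta> \<in> fock_paths s r \<and> cat es \<beta> \<in> fock_paths s r then y (cat es \<beta>) else 0)"

lemma is_path_alt:
  "is_path s r (v, es) \<longleftrightarrow> es = [] \<or> (v = s (last es) \<and> successively (\<lambda>a b. s a = r b) es)"
  unfolding is_path_def successively_conv_nth by auto

lemma is_path_cat:
  assumes "es \<noteq> []"
  shows "is_path s r (cat es b) \<longleftrightarrow>
     successively (\<lambda>a b. s a = r b) es \<and> is_path s r b \<and> prange r b = s (last es)"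
proof -
  obtain w bs where b: "b = (w, bs)" by (cases b)
  show ?thesis
  proof (cases "bs = []")
    case True
    then show ?thesis using assms by (auto simp: b cat_def is_path_alt prange_def)
  next
    case False
    then show ?thesis using assms
      by (auto simp: b cat_def is_path_alt prange_def successively_append_iff)
  qed
qed

lemma is_path_suffix:
  assumes "is_path s r (v, xs @ ys)"
  shows "is_path s r (v, ys)"
proof (cases "ys = []")
  case True then show ?thesis by (simp add: is_path_alt)
next
  case False
  then show ?thesis using assms by (auto simp: is_path_alt successively_append_iff)
qed

lemma ptl_path:
  assumes "\<gamma> \<in> fock_paths s r"
  shows "ptl p \<gamma> \<in> fock_paths s r"
proof -
  obtain v xs where g: "\<gamma> = (v, xs)" by (cases \<gamma>)
  have "is_path s r (v, take p xs @ drop p xs)" using assms g by (simp add: fock_paths_def)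
  then have "is_path s r (v, drop p xs)" by (rule is_path_suffix)
  then show ?thesis by (simp add: g ptl_def fock_paths_def)
qed

lemma cat_ptl: "take (length es) (snd \<gamma>) = es \<Longrightarrow> cat es (ptl (length es) \<gamma>) = \<gamma>"
proof -
  assume h: "take (length es) (snd \<gamma>) = es"
  have "es @ drop (length es) (snd \<gamma>) = snd \<gamma>" using append_take_drop_id[of "length es" "snd \<gamma>"] h by simp
  then show ?thesis unfolding cat_def ptl_def by simp
qed

lemma ptl_cat: "ptl (length es) (cat es b) = b"
  unfolding cat_def ptl_def by simp

lemma Spath_eq:
  assumes "es \<noteq> []"
  shows "Spath s r es x \<gamma> = (if \<gamma> \<in> fock_paths s r \<and> take (length es) (snd \<gamma>) = es
           then x (ptl (length es) \<gamma>) else 0)"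
  using assms
proof (induction es arbitrary: \<gamma> rule: list_nonempty_induct)
  case (single e)
  obtain v xs where g: "\<gamma> = (v, xs)" by (cases \<gamma>)
  show ?case
    by (cases xs) (auto simp: Spath_def Sedge_def g ptl_def)
next
  case (cons e es)
  obtain v xs where g: "\<gamma> = (v, xs)" by (cases \<gamma>)
  have sp: "Spath s r (e # es) x = Sedge s r e (Spath s r es x)"
    by (simp add: Spath_def)
  show ?case
  proof (cases xs)
    case Nil
    then show ?thesis by (simp add: sp Sedge_def g)
  next
    case (Cons e' rest)
    have "is_path s r (v, [e'] @ rest) \<Longrightarrow> is_path s r (v, rest)" by (rule is_path_suffix)
    then have suf: "\<gamma> \<in> fock_paths s r \<Longrightarrow> (v, rest) \<in> fock_paths s r"
      by (simp add: g Cons fock_paths_def)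
    show ?thesis
      using suf by (auto simp: sp Sedge_def g Cons cons.IH ptl_def)
  qed
qed




definition Qs :: "('e \<Rightarrow> 'v) \<Rightarrow> ('e \<Rightarrow> 'v) \<Rightarrow> 'e list \<Rightarrow> nat \<Rightarrow> ('v,'e) gpath set" where
  "Qs s r es k = {b \<in> paths_len s r k. cat es b \<in> fock_paths s r}"
definition Pre :: "('e \<Rightarrow> 'v) \<Rightarrow> ('e \<Rightarrow> 'v) \<Rightarrow> 'e list \<Rightarrow> nat \<Rightarrow> ('v,'e) gpath set" where
  "Pre s r es k = {\<gamma> \<in> paths_len s r (k + length es). take (length es) (snd \<gamma>) = es}"

lemma lev_paths: "lev (fock_paths s r) (\<lambda>a. length (snd a)) m = paths_len s r m"
  by (simp add: lev_def paths_len_def)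

lemma fin_paths: "finite (paths_len (s :: 'e::finite \<Rightarrow> 'v::finite) r m)"
proof -
  have "paths_len s r m \<subseteq> UNIV \<times> {xs :: 'e list. set xs \<subseteq> UNIV \<and> length xs = m}"
    by (auto simp: paths_len_def)
  moreover have "finite ((UNIV :: 'v set) \<times> {xs :: 'e list. set xs \<subseteq> UNIV \<and> length xs = m})"
    by (intro finite_cartesian_product finite_lists_length_eq) auto
  ultimately show ?thesis by (rule finite_subset)
qed

lemma paths_len_P: "\<gamma> \<in> paths_len s r k \<Longrightarrow> \<gamma> \<in> fock_paths s r"
  by (simp add: paths_len_def)

lemma bij_cat: "bij_betw (cat es) (Qs s r es k) (Pre s r es k)"
proof (rule bij_betw_byWitness[where f'="ptl (length es)"])
  show "\<forall>a\<in>Qs s r es k. ptl (length es) (cat es a) = a" by (simp add: ptl_cat)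
  show "\<forall>a'\<in>Pre s r es k. cat es (ptl (length es) a') = a'" by (simp add: Pre_def cat_ptl)
  show "cat es ` Qs s r es k \<subseteq> Pre s r es k"
    by (auto simp: Qs_def Pre_def paths_len_def cat_def)
  show "ptl (length es) ` Pre s r es k \<subseteq> Qs s r es k"
  proof
    fix b assume "b \<in> ptl (length es) ` Pre s r es k"
    then obtain \<gamma> where g: "\<gamma> \<in> Pre s r es k" "b = ptl (length es) \<gamma>" by auto
    have "b \<in> fock_paths s r" using g by (auto simp: Pre_def paths_len_def intro!: ptl_path)
    moreover have "length (snd b) = k" using g by (auto simp: Pre_def paths_len_def ptl_def)
    moreover have "cat es b \<in> fock_paths s r" using g cat_ptl[of es \<gamma>] by (auto simp: Pre_def paths_len_def)
    ultimately show "b \<in> Qs s r es k" by (simp add: Qs_def paths_len_def)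
  qed
qed

lemma sum_Pre: "(\<Sum>\<gamma>\<in>Pre s r es k. g \<gamma>) = (\<Sum>b\<in>Qs s r es k. g (cat es b))"
  using sum.reindex_bij_betw[OF bij_cat, of g] by simp

lemma Qs_sub: "Qs s r es k \<subseteq> paths_len s r k" by (auto simp: Qs_def)
lemma Pre_sub: "Pre s r es k \<subseteq> paths_len s r (k + length es)" by (auto simp: Pre_def)

lemma cat_compat:
  assumes "es \<noteq> []" "b \<in> fock_paths s r" "b' \<in> fock_paths s r" "prange r b = prange r b'"
    "cat es b \<in> fock_paths s r"
  shows "cat es b' \<in> fock_paths s r"
  using assms is_path_cat[OF assms(1), of s r b] is_path_cat[OF assms(1), of s r b'] by (auto simp: fock_paths_def)

lemma Spath_lev:
  assumes "es \<noteq> []" "\<gamma> \<in> paths_len s r (k + length es)"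
  shows "Spath s r es x \<gamma> = (if \<gamma> \<in> Pre s r es k then x (ptl (length es) \<gamma>) else 0)"
  using assms by (simp add: Spath_eq Pre_def paths_len_def)

lemma ws_supp:
  assumes "weight_seq s r Zm" "Zm k a b \<noteq> 0"
  shows "a \<in> paths_len s r k \<and> b \<in> paths_len s r k \<and> prange r a = prange r b"
  using assms unfolding weight_seq_def by blast

lemma nsq_Spath:
  assumes "es \<noteq> []" "finite (paths_len s r k)" "finite (paths_len s r (k + length es))"
  shows "nsq (paths_len s r (k + length es)) (Spath s r es x) \<le> nsq (paths_len s r k) x"
proof -
  have "nsq (paths_len s r (k + length es)) (Spath s r es x)
      = (\<Sum>\<gamma>\<in>Pre s r es k. (cmod (x (ptl (length es) \<gamma>)))\<^sup>2)"
    unfolding nsq_def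
  proof (rule sum.mono_neutral_cong_right)
    show "finite (paths_len s r (k + length es))" by (rule assms(3))
    show "Pre s r es k \<subseteq> paths_len s r (k + length es)" by (rule Pre_sub)
    show "\<forall>i\<in>paths_len s r (k + length es) - Pre s r es k. (cmod (Spath s r es x i))\<^sup>2 = 0"
      using assms by (auto simp: Spath_lev)
    show "\<And>i. i \<in> Pre s r es k \<Longrightarrow> (cmod (Spath s r es x i))\<^sup>2 = (cmod (x (ptl (length es) i)))\<^sup>2"
      using assms Pre_sub[of s r es k] by (auto simp: Spath_lev)
  qed
  also have "\<dots> = (\<Sum>b\<in>Qs s r es k. (cmod (x b))\<^sup>2)"
    by (simp add: sum_Pre ptl_cat)
  also have "\<dots> \<le> nsq (paths_len s r k) x"
    unfolding nsq_def by (rule sum_mono2) (use assms Qs_sub[of s r es k] in auto)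
  finally show ?thesis .
qed

lemma nsq_Sad:
  assumes "finite (paths_len s r k)" "finite (paths_len s r (k + length es))"
  shows "nsq (paths_len s r k) (Sad s r es y) \<le> nsq (paths_len s r (k + length es)) y"
proof -
  have "nsq (paths_len s r k) (Sad s r es y) = (\<Sum>b\<in>Qs s r es k. (cmod (y (cat es b)))\<^sup>2)"
    unfolding nsq_def
  proof (rule sum.mono_neutral_cong_right)
    show "finite (paths_len s r k)" by (rule assms(1))
    show "Qs s r es k \<subseteq> paths_len s r k" by (rule Qs_sub)
    show "\<forall>i\<in>paths_len s r k - Qs s r es k. (cmod (Sad s r es y i))\<^sup>2 = 0"
      by (auto simp: Sad_def Qs_def)
    show "\<And>i. i \<in> Qs s r es k \<Longrightarrow> (cmod (Sad s r es y i))\<^sup>2 = (cmod (y (cat es i)))\<^sup>2"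
      by (auto simp: Sad_def Qs_def paths_len_def)
  qed
  also have "\<dots> = (\<Sum>\<gamma>\<in>Pre s r es k. (cmod (y \<gamma>))\<^sup>2)"
    by (simp add: sum_Pre)
  also have "\<dots> \<le> nsq (paths_len s r (k + length es)) y"
    unfolding nsq_def by (rule sum_mono2) (use assms Pre_sub[of s r es k] in auto)
  finally show ?thesis .
qed




definition Mk :: "('e \<Rightarrow> 'v) \<Rightarrow> ('e \<Rightarrow> 'v) \<Rightarrow> nat \<Rightarrow> (nat \<Rightarrow> ('v,'e) gpath \<Rightarrow> ('v,'e) gpath \<Rightarrow> complex)
   \<Rightarrow> nat \<Rightarrow> ('v,'e) gpath \<Rightarrow> ('v,'e) gpath \<Rightarrow> complex" where
  "Mk s r p Zm k = (\<lambda>a b. tensorI s r p Zm k a b - Zm (k + p) a b)"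

definition KD where
  "KD s r Zm es \<gamma> b = (if cat es b \<in> fock_paths s r
     then Mk s r (length es) Zm (length (snd \<gamma>) - length es) \<gamma> (cat es b) else 0)"

definition KD' where
  "KD' s r Zm es \<beta> b = - (if cat es \<beta> \<in> fock_paths s r
     then Mk s r (length es) Zm (length (snd \<beta>)) (cat es \<beta>) b else 0)"

lemma nsq_cong: "(\<And>a. a \<in> A \<Longrightarrow> x a = y a) \<Longrightarrow> nsq A x = nsq A y"
  unfolding nsq_def by simp

lemma tensorI_eq: "tensorI s r p Zm k a b =
  (if a \<in> paths_len s r (k + p) \<and> b \<in> paths_len s r (k + p) \<and> take p (snd a) = take p (snd b)
   then Zm k (ptl p a) (ptl p b) else 0)"
  by (simp add: tensorI_def ptl_def)

lemma ptl_lev: "\<gamma> \<in> paths_len s r (k + p) \<Longrightarrow> ptl p \<gamma> \<in> paths_len s r k"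
  by (auto simp: paths_len_def ptl_def intro: ptl_path[unfolded ptl_def])

lemma Zop_lev: "\<gamma> \<in> paths_len s r k \<Longrightarrow>
    Zop s r Zm x \<gamma> = (\<Sum>\<beta>\<in>paths_len s r k. Zm k \<gamma> \<beta> * x \<beta>)"
  by (simp add: Zop_def paths_len_def)

lemma sum_E:
  assumes ws: "weight_seq s r Zm" and es: "es \<noteq> []" and p: "p = length es"
    and g: "\<gamma> \<in> paths_len s r (k + p)"
    and fin: "finite (paths_len s r (k + p))" "finite (paths_len s r k)"
  shows "(\<Sum>\<beta>'\<in>paths_len s r (k + p). tensorI s r p Zm k \<gamma> \<beta>' * Spath s r es x \<beta>')
       = (if take p (snd \<gamma>) = es then (\<Sum>\<beta>\<in>paths_len s r k. Zm k (ptl p \<gamma>) \<beta> * x \<beta>) else 0)"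
proof (cases "take p (snd \<gamma>) = es")
  case False
  have "tensorI s r p Zm k \<gamma> \<beta>' * Spath s r es x \<beta>' = 0" if "\<beta>' \<in> paths_len s r (k + p)" for \<beta>'
    using that False p es by (auto simp: Spath_lev tensorI_eq Pre_def)
  then have "(\<Sum>\<beta>'\<in>paths_len s r (k + p). tensorI s r p Zm k \<gamma> \<beta>' * Spath s r es x \<beta>') = 0"
    by (intro sum.neutral ballI)
  then show ?thesis using False by simp
next
  case True
  have "(\<Sum>\<beta>'\<in>paths_len s r (k + p). tensorI s r p Zm k \<gamma> \<beta>' * Spath s r es x \<beta>')
      = (\<Sum>\<beta>'\<in>Pre s r es k. Zm k (ptl p \<gamma>) (ptl p \<beta>') * x (ptl p \<beta>'))"
  proof (rule sum.mono_neutral_cong_right)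
    show "finite (paths_len s r (k + p))" by (rule fin(1))
    show "Pre s r es k \<subseteq> paths_len s r (k + p)" using Pre_sub p by blast
    show "\<forall>i\<in>paths_len s r (k + p) - Pre s r es k. tensorI s r p Zm k \<gamma> i * Spath s r es x i = 0"
      using es p by (auto simp: Spath_lev)
    show "tensorI s r p Zm k \<gamma> i * Spath s r es x i = Zm k (ptl p \<gamma>) (ptl p i) * x (ptl p i)"
      if "i \<in> Pre s r es k" for i
      using that es p g True by (auto simp: Spath_lev tensorI_eq Pre_def)
  qed
  also have "\<dots> = (\<Sum>b\<in>Qs s r es k. Zm k (ptl p \<gamma>) b * x b)"
    by (simp add: sum_Pre ptl_cat p)
  also have "\<dots> = (\<Sum>b\<in>paths_len s r k. Zm k (ptl p \<gamma>) b * x b)"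
  proof (rule sum.mono_neutral_left)
    show "finite (paths_len s r k)" by (rule fin(2))
    show "Qs s r es k \<subseteq> paths_len s r k" by (rule Qs_sub)
    show "\<forall>i\<in>paths_len s r k - Qs s r es k. Zm k (ptl p \<gamma>) i * x i = 0"
    proof
      fix b assume b: "b \<in> paths_len s r k - Qs s r es k"
      show "Zm k (ptl p \<gamma>) b * x b = 0"
      proof (rule ccontr)
        assume "Zm k (ptl p \<gamma>) b * x b \<noteq> 0"
        then have "Zm k (ptl p \<gamma>) b \<noteq> 0" by auto
        from ws_supp[OF ws this] have pr: "prange r (ptl p \<gamma>) = prange r b"
          and pl: "ptl p \<gamma> \<in> paths_len s r k" by auto
        have "cat es (ptl p \<gamma>) = \<gamma>" using cat_ptl[of es \<gamma>] True p by simp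
        then have "cat es (ptl p \<gamma>) \<in> fock_paths s r" using g by (simp add: paths_len_def)
        moreover have bP: "b \<in> fock_paths s r" using b by (auto simp: paths_len_def)
        ultimately have "cat es b \<in> fock_paths s r"
          using cat_compat[OF es paths_len_P[OF pl] bP pr] by blast
        then show False using b by (auto simp: Qs_def)
      qed
    qed
  qed
  finally show ?thesis using True by simp
qed

lemma D1:
  assumes ws: "weight_seq s r Zm" and es: "es \<noteq> []" and p: "p = length es"
    and g: "\<gamma> \<in> paths_len s r (k + p)"
    and fin: "finite (paths_len s r (k + p))" "finite (paths_len s r k)"
  shows "Spath s r es (Zop s r Zm x) \<gamma> - Zop s r Zm (Spath s r es x) \<gamma>
       = matop (paths_len s r (k + p)) (Mk s r p Zm k) (Spath s r es x) \<gamma>"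
proof -
  have "Spath s r es (Zop s r Zm x) \<gamma>
      = (if take p (snd \<gamma>) = es then (\<Sum>\<beta>\<in>paths_len s r k. Zm k (ptl p \<gamma>) \<beta> * x \<beta>) else 0)"
    using es p g Zop_lev[OF ptl_lev[OF g], of Zm x] by (auto simp: Spath_lev Pre_def)
  also have "\<dots> = (\<Sum>\<beta>'\<in>paths_len s r (k + p). tensorI s r p Zm k \<gamma> \<beta>' * Spath s r es x \<beta>')"
    by (rule sum_E[OF ws es p g fin, symmetric])
  finally have 1: "Spath s r es (Zop s r Zm x) \<gamma> = \<dots>" .
  have 2: "Zop s r Zm (Spath s r es x) \<gamma> = (\<Sum>\<beta>'\<in>paths_len s r (k + p). Zm (k + p) \<gamma> \<beta>' * Spath s r es x \<beta>')"
    by (rule Zop_lev[OF g])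
  show ?thesis unfolding 1 2 using g
    by (simp add: matop_def Mk_def sum_subtractf left_diff_distrib)
qed

lemma D3:
  assumes es: "es \<noteq> []" and p: "p = length es"
    and g: "\<gamma> \<in> paths_len s r (k + p)"
    and fin: "finite (paths_len s r (k + p))" "finite (paths_len s r k)"
  shows "matop (paths_len s r (k + p)) (Mk s r p Zm k) (Spath s r es x) \<gamma>
       = (\<Sum>b\<in>paths_len s r k. KD s r Zm es \<gamma> b * x b)"
proof -
  have lg: "length (snd \<gamma>) - length es = k" using g p by (simp add: paths_len_def)
  have "matop (paths_len s r (k + p)) (Mk s r p Zm k) (Spath s r es x) \<gamma>
      = (\<Sum>\<beta>'\<in>paths_len s r (k + p). Mk s r p Zm k \<gamma> \<beta>' * Spath s r es x \<beta>')"
    using g by (simp add: matop_def)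
  also have "\<dots> = (\<Sum>\<beta>'\<in>Pre s r es k. Mk s r p Zm k \<gamma> \<beta>' * x (ptl p \<beta>'))"
  proof (rule sum.mono_neutral_cong_right)
    show "finite (paths_len s r (k + p))" by (rule fin(1))
    show "Pre s r es k \<subseteq> paths_len s r (k + p)" using Pre_sub p by blast
    show "\<forall>i\<in>paths_len s r (k + p) - Pre s r es k. Mk s r p Zm k \<gamma> i * Spath s r es x i = 0"
      using es p by (auto simp: Spath_lev)
    show "Mk s r p Zm k \<gamma> i * Spath s r es x i = Mk s r p Zm k \<gamma> i * x (ptl p i)"
      if "i \<in> Pre s r es k" for i
      using that es p by (auto simp: Spath_lev Pre_def)
  qed
  also have "\<dots> = (\<Sum>b\<in>Qs s r es k. Mk s r p Zm k \<gamma> (cat es b) * x b)"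
    by (simp add: sum_Pre ptl_cat p)
  also have "\<dots> = (\<Sum>b\<in>paths_len s r k. KD s r Zm es \<gamma> b * x b)"
  proof (rule sum.mono_neutral_cong_left)
    show "finite (paths_len s r k)" by (rule fin(2))
    show "Qs s r es k \<subseteq> paths_len s r k" by (rule Qs_sub)
    show "\<forall>i\<in>paths_len s r k - Qs s r es k. KD s r Zm es \<gamma> i * x i = 0"
      by (auto simp: KD_def Qs_def)
    show "Mk s r p Zm k \<gamma> (cat es b) * x b = KD s r Zm es \<gamma> b * x b" if "b \<in> Qs s r es k" for b
      using that lg p by (auto simp: KD_def Qs_def)
  qed
  finally show ?thesis .
qed

lemma Spath_short:
  assumes "es \<noteq> []" "length (snd \<gamma>) < length es"
  shows "Spath s r es x \<gamma> = 0"
proof -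
  have "take (length es) (snd \<gamma>) \<noteq> es"
  proof
    assume h: "take (length es) (snd \<gamma>) = es"
    have "length (take (length es) (snd \<gamma>)) < length es" using assms by simp
    then show False using h by simp
  qed
  then show ?thesis using assms by (simp add: Spath_eq)
qed

lemma D_kop:
  fixes s r :: "'e::finite \<Rightarrow> 'v::finite"
  assumes ws: "weight_seq s r Zm" and es: "es \<noteq> []"
  shows "(\<lambda>x a. Spath s r es (Zop s r Zm x) a - Zop s r Zm (Spath s r es x) a)
       = kop (fock_paths s r) (\<lambda>a. length (snd a)) (\<lambda>m. m - length es) (length es) (KD s r Zm es)"
proof (intro ext)
  fix x \<gamma>
  let ?p = "length es"
  show "Spath s r es (Zop s r Zm x) \<gamma> - Zop s r Zm (Spath s r es x) \<gamma>
      = kop (fock_paths s r) (\<lambda>a. length (snd a)) (\<lambda>m. m - ?p) ?p (KD s r Zm es) x \<gamma>"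
  proof (cases "\<gamma> \<in> fock_paths s r")
    case False
    then show ?thesis using es by (simp add: Spath_eq Zop_def kop_def)
  next
    case inP: True
    show ?thesis
    proof (cases "length (snd \<gamma>) < ?p")
      case True
      have "Zop s r Zm (Spath s r es x) \<gamma> = 0"
        using True es by (auto simp: Zop_def paths_len_def Spath_short intro!: sum.neutral)
      then show ?thesis using True es by (simp add: Spath_short kop_def)
    next
      case False
      define k where "k = length (snd \<gamma>) - ?p"
      have g: "\<gamma> \<in> paths_len s r (k + ?p)" using False inP by (simp add: k_def paths_len_def)
      have "Spath s r es (Zop s r Zm x) \<gamma> - Zop s r Zm (Spath s r es x) \<gamma>
          = (\<Sum>b\<in>paths_len s r k. KD s r Zm es \<gamma> b * x b)"
        using D1[OF ws es refl g fin_paths fin_paths] D3[OF es refl g fin_paths fin_paths] by simp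
      then show ?thesis using False inP by (simp add: kop_def lev_paths k_def)
    qed
  qed
qed




lemma sum_F:
  assumes es: "es \<noteq> []" and p: "p = length es" and b: "\<beta> \<in> paths_len s r k"
    and c: "cat es \<beta> \<in> fock_paths s r"
    and fin: "finite (paths_len s r (k + p))"
  shows "(\<Sum>\<beta>'\<in>paths_len s r (k + p). tensorI s r p Zm k (cat es \<beta>) \<beta>' * x \<beta>')
       = (\<Sum>b\<in>Qs s r es k. Zm k \<beta> b * x (cat es b))"
proof -
  have cl: "cat es \<beta> \<in> paths_len s r (k + p)" using b c p by (simp add: paths_len_def cat_def)
  have tk: "take p (snd (cat es \<beta>)) = es" using p by (simp add: cat_def)
  have "(\<Sum>\<beta>'\<in>paths_len s r (k + p). tensorI s r p Zm k (cat es \<beta>) \<beta>' * x \<beta>')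
      = (\<Sum>\<beta>'\<in>Pre s r es k. Zm k \<beta> (ptl p \<beta>') * x \<beta>')"
  proof (rule sum.mono_neutral_cong_right)
    show "finite (paths_len s r (k + p))" by (rule fin)
    show "Pre s r es k \<subseteq> paths_len s r (k + p)" using Pre_sub p by blast
    show "\<forall>i\<in>paths_len s r (k + p) - Pre s r es k. tensorI s r p Zm k (cat es \<beta>) i * x i = 0"
      using tk p by (auto simp: tensorI_eq Pre_def)
    show "tensorI s r p Zm k (cat es \<beta>) i * x i = Zm k \<beta> (ptl p i) * x i" if "i \<in> Pre s r es k" for i
      using that tk p cl by (auto simp: tensorI_eq Pre_def ptl_cat)
  qed
  also have "\<dots> = (\<Sum>b\<in>Qs s r es k. Zm k \<beta> b * x (cat es b))"
    by (simp add: sum_Pre ptl_cat p)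
  finally show ?thesis .
qed

lemma Zop_Sad:
  assumes b: "\<beta> \<in> paths_len s r k" and fin: "finite (paths_len s r k)"
  shows "Zop s r Zm (Sad s r es x) \<beta> = (\<Sum>b\<in>Qs s r es k. Zm k \<beta> b * x (cat es b))"
proof -
  have "Zop s r Zm (Sad s r es x) \<beta> = (\<Sum>b\<in>paths_len s r k. Zm k \<beta> b * Sad s r es x b)"
    by (rule Zop_lev[OF b])
  also have "\<dots> = (\<Sum>b\<in>Qs s r es k. Zm k \<beta> b * x (cat es b))"
  proof (rule sum.mono_neutral_cong_right)
    show "finite (paths_len s r k)" by (rule fin)
    show "Qs s r es k \<subseteq> paths_len s r k" by (rule Qs_sub)
    show "\<forall>i\<in>paths_len s r k - Qs s r es k. Zm k \<beta> i * Sad s r es x i = 0"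
      by (auto simp: Sad_def Qs_def)
    show "Zm k \<beta> i * Sad s r es x i = Zm k \<beta> i * x (cat es i)" if "i \<in> Qs s r es k" for i
      using that by (auto simp: Sad_def Qs_def paths_len_def)
  qed
  finally show ?thesis .
qed

lemma G1:
  assumes ws: "weight_seq s r Zm" and es: "es \<noteq> []" and p: "p = length es"
    and b: "\<beta> \<in> paths_len s r k"
    and fin: "finite (paths_len s r (k + p))" "finite (paths_len s r k)"
  shows "Sad s r es (Zop s r Zm x) \<beta> - Zop s r Zm (Sad s r es x) \<beta>
       = - Sad s r es (matop (paths_len s r (k + p)) (Mk s r p Zm k) x) \<beta>"
proof (cases "cat es \<beta> \<in> fock_paths s r")
  case True
  have bP: "\<beta> \<in> fock_paths s r" using b by (simp add: paths_len_def)
  have cl: "cat es \<beta> \<in> paths_len s r (k + p)" using b True p by (simp add: paths_len_def cat_def)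
  have 1: "Sad s r es (Zop s r Zm x) \<beta> = (\<Sum>\<beta>'\<in>paths_len s r (k + p). Zm (k + p) (cat es \<beta>) \<beta>' * x \<beta>')"
    using True bP Zop_lev[OF cl, of Zm x] by (simp add: Sad_def)
  have 2: "Sad s r es (matop (paths_len s r (k + p)) (Mk s r p Zm k) x) \<beta>
     = (\<Sum>\<beta>'\<in>paths_len s r (k + p). tensorI s r p Zm k (cat es \<beta>) \<beta>' * x \<beta>')
       - (\<Sum>\<beta>'\<in>paths_len s r (k + p). Zm (k + p) (cat es \<beta>) \<beta>' * x \<beta>')"
    using True bP cl by (simp add: Sad_def matop_def Mk_def sum_subtractf left_diff_distrib)
  show ?thesis unfolding 1 2 sum_F[OF es p b True fin(1)] Zop_Sad[OF b fin(2)] by simp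
next
  case False
  have "Zm k \<beta> b' * Sad s r es x b' = 0" if b': "b' \<in> paths_len s r k" for b'
  proof (rule ccontr)
    assume "Zm k \<beta> b' * Sad s r es x b' \<noteq> 0"
    then have z: "Zm k \<beta> b' \<noteq> 0" and sd: "Sad s r es x b' \<noteq> 0" by auto
    from ws_supp[OF ws z] have pr: "prange r b' = prange r \<beta>" by simp
    from sd have "cat es b' \<in> fock_paths s r" "b' \<in> fock_paths s r" by (auto simp: Sad_def split: if_splits)
    then have "cat es \<beta> \<in> fock_paths s r"
      using cat_compat[OF es _ paths_len_P[OF b] pr] by blast
    then show False using False by simp
  qed
  then have "Zop s r Zm (Sad s r es x) \<beta> = 0"
    unfolding Zop_lev[OF b] by (intro sum.neutral ballI)
  then show ?thesis using False by (simp add: Sad_def)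
qed

lemma Dp_kop:
  fixes s r :: "'e::finite \<Rightarrow> 'v::finite"
  assumes ws: "weight_seq s r Zm" and es: "es \<noteq> []"
  shows "(\<lambda>x a. Sad s r es (Zop s r Zm x) a - Zop s r Zm (Sad s r es x) a)
       = kop (fock_paths s r) (\<lambda>a. length (snd a)) (\<lambda>m. m + length es) 0 (KD' s r Zm es)"
proof (intro ext)
  fix x \<beta>
  let ?p = "length es"
  show "Sad s r es (Zop s r Zm x) \<beta> - Zop s r Zm (Sad s r es x) \<beta>
      = kop (fock_paths s r) (\<lambda>a. length (snd a)) (\<lambda>m. m + ?p) 0 (KD' s r Zm es) x \<beta>"
  proof (cases "\<beta> \<in> fock_paths s r")
    case False
    then show ?thesis by (simp add: Sad_def Zop_def kop_def)
  next
    case inP: True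
    define k where "k = length (snd \<beta>)"
    have b: "\<beta> \<in> paths_len s r k" using inP by (simp add: k_def paths_len_def)
    have "Sad s r es (Zop s r Zm x) \<beta> - Zop s r Zm (Sad s r es x) \<beta>
        = - Sad s r es (matop (paths_len s r (k + ?p)) (Mk s r ?p Zm k) x) \<beta>"
      by (rule G1[OF ws es refl b fin_paths fin_paths])
    also have "\<dots> = (\<Sum>b\<in>paths_len s r (k + ?p). KD' s r Zm es \<beta> b * x b)"
    proof (cases "cat es \<beta> \<in> fock_paths s r")
      case True
      have cl: "cat es \<beta> \<in> paths_len s r (k + ?p)" using b True by (simp add: paths_len_def cat_def)
      show ?thesis using True inP cl
        by (simp add: Sad_def matop_def KD'_def k_def sum_negf)
    next
      case False
      then show ?thesis by (simp add: Sad_def KD'_def)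
    qed
    finally show ?thesis using inP by (simp add: kop_def lev_paths k_def)
  qed
qed

lemma Zop_kop:
  "Zop s r Zm = kop (fock_paths s r) (\<lambda>a. length (snd a)) id 0 (\<lambda>\<gamma> b. Zm (length (snd \<gamma>)) \<gamma> b)"
  by (intro ext) (simp add: Zop_def kop_def lev_paths)

lemma Sad_kop:
  fixes s r :: "'e::finite \<Rightarrow> 'v::finite"
  shows "Sad s r es = kop (fock_paths s r) (\<lambda>a. length (snd a)) (\<lambda>m. m + length es) 0
     (\<lambda>\<beta> b. if b = cat es \<beta> then 1 else 0)"
proof (intro ext)
  fix y \<beta>
  show "Sad s r es y \<beta> = kop (fock_paths s r) (\<lambda>a. length (snd a)) (\<lambda>m. m + length es) 0
     (\<lambda>\<beta> b. if b = cat es \<beta> then 1 else 0) y \<beta>"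
  proof (cases "\<beta> \<in> fock_paths s r")
    case True
    have "(\<Sum>b\<in>paths_len s r (length (snd \<beta>) + length es). (if b = cat es \<beta> then 1 else 0) * y b)
        = (if cat es \<beta> \<in> paths_len s r (length (snd \<beta>) + length es) then y (cat es \<beta>) else 0)"
      using fin_paths[of s r "length (snd \<beta>) + length es"]
      by (simp add: if_distrib[of "\<lambda>c. c * _"] sum.delta cong: if_cong)
    then show ?thesis using True by (simp add: Sad_def kop_def lev_paths paths_len_def cat_def)
  next
    case False
    then show ?thesis by (simp add: Sad_def kop_def)
  qed
qed




lemma bnd_D:
  fixes s r :: "'e::finite \<Rightarrow> 'v::finite"
  assumes ws: "weight_seq s r Zm" and es: "es \<noteq> []" and p: "p = length es" and m: "m \<ge> p"
  shows "nsq (lev (fock_paths s r) (\<lambda>a. length (snd a)) m)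
           (kop (fock_paths s r) (\<lambda>a. length (snd a)) (\<lambda>m. m - p) p (KD s r Zm es) x)
       \<le> (fin_opnorm (paths_len s r (m - p + p)) (Mk s r p Zm (m - p)))\<^sup>2
           * nsq (lev (fock_paths s r) (\<lambda>a. length (snd a)) (m - p)) x"
proof -
  define k where "k = m - p"
  have mk: "m = k + p" using m by (simp add: k_def)
  let ?S = "paths_len s r (k + p)"
  have "nsq ?S (kop (fock_paths s r) (\<lambda>a. length (snd a)) (\<lambda>m. m - p) p (KD s r Zm es) x)
      = nsq ?S (matop ?S (Mk s r p Zm k) (Spath s r es x))"
  proof (rule nsq_cong)
    fix \<gamma> assume g: "\<gamma> \<in> ?S"
    have "kop (fock_paths s r) (\<lambda>a. length (snd a)) (\<lambda>m. m - p) p (KD s r Zm es) x \<gamma>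
        = Spath s r es (Zop s r Zm x) \<gamma> - Zop s r Zm (Spath s r es x) \<gamma>"
      using fun_cong[OF fun_cong[OF D_kop[OF ws es], of x], of \<gamma>] p by simp
    also have "\<dots> = matop ?S (Mk s r p Zm k) (Spath s r es x) \<gamma>"
      by (rule D1[OF ws es p g fin_paths fin_paths])
    finally show "kop (fock_paths s r) (\<lambda>a. length (snd a)) (\<lambda>m. m - p) p (KD s r Zm es) x \<gamma>
        = matop ?S (Mk s r p Zm k) (Spath s r es x) \<gamma>" .
  qed
  also have "\<dots> \<le> (fin_opnorm ?S (Mk s r p Zm k))\<^sup>2 * nsq ?S (Spath s r es x)"
    by (rule fin_opnorm_bound[OF fin_paths])
  also have "\<dots> \<le> (fin_opnorm ?S (Mk s r p Zm k))\<^sup>2 * nsq (paths_len s r k) x"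
    by (rule mult_left_mono) (use nsq_Spath[OF es fin_paths fin_paths, of s r k x] p in auto)
  finally show ?thesis unfolding lev_paths mk by simp
qed

lemma bnd_Dp:
  fixes s r :: "'e::finite \<Rightarrow> 'v::finite"
  assumes ws: "weight_seq s r Zm" and es: "es \<noteq> []" and p: "p = length es"
  shows "nsq (lev (fock_paths s r) (\<lambda>a. length (snd a)) k)
           (kop (fock_paths s r) (\<lambda>a. length (snd a)) (\<lambda>m. m + p) 0 (KD' s r Zm es) x)
       \<le> (fin_opnorm (paths_len s r (k + p)) (Mk s r p Zm k))\<^sup>2
           * nsq (lev (fock_paths s r) (\<lambda>a. length (snd a)) (k + p)) x"
proof -
  let ?S = "paths_len s r (k + p)"
  let ?y = "matop ?S (Mk s r p Zm k) x"
  have "nsq (paths_len s r k) (kop (fock_paths s r) (\<lambda>a. length (snd a)) (\<lambda>m. m + p) 0 (KD' s r Zm es) x)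
      = nsq (paths_len s r k) (\<lambda>\<beta>. - Sad s r es ?y \<beta>)"
  proof (rule nsq_cong)
    fix \<beta> assume b: "\<beta> \<in> paths_len s r k"
    have "kop (fock_paths s r) (\<lambda>a. length (snd a)) (\<lambda>m. m + p) 0 (KD' s r Zm es) x \<beta>
        = Sad s r es (Zop s r Zm x) \<beta> - Zop s r Zm (Sad s r es x) \<beta>"
      using fun_cong[OF fun_cong[OF Dp_kop[OF ws es], of x], of \<beta>] p by simp
    also have "\<dots> = - Sad s r es ?y \<beta>"
      by (rule G1[OF ws es p b fin_paths fin_paths])
    finally show "kop (fock_paths s r) (\<lambda>a. length (snd a)) (\<lambda>m. m + p) 0 (KD' s r Zm es) x \<beta>
        = - Sad s r es ?y \<beta>" .
  qed
  also have "\<dots> = nsq (paths_len s r k) (Sad s r es ?y)" unfolding nsq_def by simp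
  also have "\<dots> \<le> nsq ?S ?y" using nsq_Sad[OF fin_paths fin_paths, of s r k es ?y] p by simp
  also have "\<dots> \<le> (fin_opnorm ?S (Mk s r p Zm k))\<^sup>2 * nsq ?S x"
    by (rule fin_opnorm_bound[OF fin_paths])
  finally show ?thesis unfolding lev_paths .
qed

lemma bnd_Z:
  fixes s r :: "'e::finite \<Rightarrow> 'v::finite"
  assumes ws: "weight_seq s r Zm"
  obtains C where "\<And>m x. nsq (lev (fock_paths s r) (\<lambda>a. length (snd a)) m)
           (kop (fock_paths s r) (\<lambda>a. length (snd a)) id 0 (\<lambda>\<gamma> b. Zm (length (snd \<gamma>)) \<gamma> b) x)
       \<le> C\<^sup>2 * nsq (lev (fock_paths s r) (\<lambda>a. length (snd a)) (id m)) x"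
proof -
  obtain C where C: "\<And>k. fin_opnorm (paths_len s r k) (Zm k) \<le> C"
    using ws unfolding weight_seq_def by blast
  have "nsq (paths_len s r m) (Zop s r Zm x) \<le> C\<^sup>2 * nsq (paths_len s r m) x" for m x
  proof -
    have "nsq (paths_len s r m) (Zop s r Zm x) = nsq (paths_len s r m) (matop (paths_len s r m) (Zm m) x)"
      by (rule nsq_cong) (simp add: Zop_lev matop_def)
    also have "\<dots> \<le> (fin_opnorm (paths_len s r m) (Zm m))\<^sup>2 * nsq (paths_len s r m) x"
      by (rule fin_opnorm_bound[OF fin_paths])
    also have "\<dots> \<le> C\<^sup>2 * nsq (paths_len s r m) x"
      by (rule mult_right_mono[OF power_mono[OF C fin_opnorm_nonneg[OF fin_paths]] nsq_nonneg])
    finally show ?thesis .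
  qed
  then show ?thesis using that[of C] by (simp add: lev_paths Zop_kop[symmetric])
qed

lemma bnd_Sad:
  fixes s r :: "'e::finite \<Rightarrow> 'v::finite"
  shows "nsq (lev (fock_paths s r) (\<lambda>a. length (snd a)) m)
           (kop (fock_paths s r) (\<lambda>a. length (snd a)) (\<lambda>m. m + length es) 0
              (\<lambda>\<beta> b. if b = cat es \<beta> then 1 else 0) x)
       \<le> 1\<^sup>2 * nsq (lev (fock_paths s r) (\<lambda>a. length (snd a)) (m + length es)) x"
  using nsq_Sad[OF fin_paths fin_paths, of s r m es x] by (simp add: lev_paths Sad_kop[symmetric])

lemma Zop_ell2:
  fixes s r :: "'e::finite \<Rightarrow> 'v::finite"
  assumes ws: "weight_seq s r Zm" and x: "x \<in> ell2 (fock_paths s r)"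
  shows "Zop s r Zm x \<in> ell2 (fock_paths s r)"
proof -
  obtain C where C: "\<And>m x. nsq (lev (fock_paths s r) (\<lambda>a. length (snd a)) m)
           (kop (fock_paths s r) (\<lambda>a. length (snd a)) id 0 (\<lambda>\<gamma> b. Zm (length (snd \<gamma>)) \<gamma> b) x)
       \<le> C\<^sup>2 * nsq (lev (fock_paths s r) (\<lambda>a. length (snd a)) (id m)) x"
    using bnd_Z[OF ws] by blast
  show ?thesis unfolding Zop_kop
    by (rule kop_ell2[OF _ _ C x]) (auto simp: lev_paths fin_paths)
qed

lemma Sad_ell2:
  fixes s r :: "'e::finite \<Rightarrow> 'v::finite"
  assumes x: "x \<in> ell2 (fock_paths s r)"
  shows "Sad s r es x \<in> ell2 (fock_paths s r)"
  unfolding Sad_kop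
  by (rule kop_ell2[OF _ _ bnd_Sad x]) (auto simp: lev_paths fin_paths inj_on_def)




definition pa :: "('e \<Rightarrow> 'v) \<Rightarrow> nat \<Rightarrow> ('v,'e) gpath \<Rightarrow> ('v,'e) gpath" where
  "pa s p b = (s (last (take p (snd b))), take p (snd b))"

lemma pa_prop:
  assumes p: "p \<ge> 1" and b: "b \<in> paths_len s r (n + p)"
  shows "pa s p b \<in> paths_len s r p"
    and "\<And>\<alpha>. \<alpha> \<in> paths_len s r p \<Longrightarrow> take p (snd b) = snd \<alpha> \<longleftrightarrow> \<alpha> = pa s p b"
proof -
  define t where "t = take p (snd b)"
  have lt: "length t = p" using b by (simp add: t_def paths_len_def)
  have tne: "t \<noteq> []" using lt p by auto
  have "take (length t) (snd b) = t" using lt t_def by simp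
  then have "cat t (ptl (length t) b) = b" by (rule cat_ptl)
  then have "is_path s r (cat t (ptl (length t) b))" using b by (simp add: paths_len_def fock_paths_def)
  then have sc: "successively (\<lambda>a b. s a = r b) t" using is_path_cat[OF tne] by blast
  show pin: "pa s p b \<in> paths_len s r p"
    using sc tne lt by (simp add: pa_def t_def[symmetric] paths_len_def fock_paths_def is_path_alt)
  fix \<alpha> assume a: "\<alpha> \<in> paths_len s r p"
  show "take p (snd b) = snd \<alpha> \<longleftrightarrow> \<alpha> = pa s p b"
  proof
    assume h: "take p (snd b) = snd \<alpha>"
    obtain v es where av: "\<alpha> = (v, es)" by (cases \<alpha>)
    have "is_path s r (v, es)" using a av by (simp add: paths_len_def fock_paths_def)
    moreover have "es = t" using h av by (simp add: t_def)
    ultimately have "v = s (last t)" using tne by (simp add: is_path_alt)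
    then show "\<alpha> = pa s p b" using av \<open>es = t\<close> by (simp add: pa_def t_def)
  next
    assume "\<alpha> = pa s p b"
    then show "take p (snd b) = snd \<alpha>" by (simp add: pa_def)
  qed
qed

lemma decomp_entry:
  fixes s r :: "'e::finite \<Rightarrow> 'v::finite"
  assumes p: "p \<ge> 1" and b: "b \<in> paths_len s r (n + p)"
  shows "(\<Sum>\<alpha>\<in>paths_len s r p. (if take p (snd b) = snd \<alpha> then y b else 0)) = y b"
proof -
  have "(\<Sum>\<alpha>\<in>paths_len s r p. (if take p (snd b) = snd \<alpha> then y b else 0))
      = (\<Sum>\<alpha>\<in>paths_len s r p. (if \<alpha> = pa s p b then y b else 0))"
    by (rule sum.cong[OF refl]) (use pa_prop(2)[OF p b] in auto)
  also have "\<dots> = y b" using pa_prop(1)[OF p b] fin_paths[of s r p] by simp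
  finally show ?thesis .
qed

lemma matop_decomp:
  fixes s r :: "'e::finite \<Rightarrow> 'v::finite"
  assumes p: "p \<ge> 1"
  shows "matop (paths_len s r (n + p)) M y \<gamma>
     = (\<Sum>\<alpha>\<in>paths_len s r p. matop (paths_len s r (n + p)) M
          (\<lambda>\<beta>. if take p (snd \<beta>) = snd \<alpha> then y \<beta> else 0) \<gamma>)"
proof (cases "\<gamma> \<in> paths_len s r (n + p)")
  case True
  have "matop (paths_len s r (n + p)) M y \<gamma> = (\<Sum>b\<in>paths_len s r (n + p). M \<gamma> b * y b)"
    using True by (simp add: matop_def)
  also have "\<dots> = (\<Sum>b\<in>paths_len s r (n + p). \<Sum>\<alpha>\<in>paths_len s r p.
        M \<gamma> b * (if take p (snd b) = snd \<alpha> then y b else 0))"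
    by (rule sum.cong[OF refl]) (simp add: decomp_entry[OF p] sum_distrib_left[symmetric])
  also have "\<dots> = (\<Sum>\<alpha>\<in>paths_len s r p. \<Sum>b\<in>paths_len s r (n + p).
        M \<gamma> b * (if take p (snd b) = snd \<alpha> then y b else 0))"
    by (rule sum.swap)
  also have "\<dots> = (\<Sum>\<alpha>\<in>paths_len s r p. matop (paths_len s r (n + p)) M
          (\<lambda>\<beta>. if take p (snd \<beta>) = snd \<alpha> then y \<beta> else 0) \<gamma>)"
    using True by (simp add: matop_def)
  finally show ?thesis .
next
  case False
  then show ?thesis by (simp add: matop_def)
qed

lemma Spath_Sad_P:
  assumes es: "es \<noteq> []" and p: "p = length es" and b: "b \<in> paths_len s r (n + p)"
  shows "Spath s r es (Sad s r es (\<lambda>\<beta>. if take p (snd \<beta>) = es then y \<beta> else 0)) b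
       = (if take p (snd b) = es then y b else 0)"
proof (cases "take p (snd b) = es")
  case True
  have bP: "b \<in> fock_paths s r" using b by (simp add: paths_len_def)
  have c: "cat es (ptl p b) = b" using cat_ptl[of es b] True p by simp
  have "ptl p b \<in> fock_paths s r" using ptl_path[OF bP] .
  then show ?thesis using True es p b c bP by (simp add: Spath_lev Pre_def Sad_def)
next
  case False
  then show ?thesis using es p b by (simp add: Spath_lev Pre_def)
qed

lemma inner_delta:
  assumes "\<beta> \<in> P"
  shows "inner2 P (\<lambda>a. if a = \<beta> then 1 else 0) z = cnj (z \<beta>)"
proof -
  have "inner2 P (\<lambda>a. if a = \<beta> then 1 else 0) z = infsum (\<lambda>a. (if a = \<beta> then 1 else 0) * cnj (z a)) {\<beta>}"
    unfolding inner2_def by (rule infsum_cong_neutral) (use assms in auto)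
  then show ?thesis by simp
qed

lemma adj_Sad:
  assumes es: "es \<noteq> []"
  shows "inner2 (fock_paths s r) (Spath s r es x) y = inner2 (fock_paths s r) x (Sad s r es y)"
proof -
  let ?P = "fock_paths s r"
  define Qa where "Qa = {b \<in> ?P. cat es b \<in> ?P}"
  have injc: "inj_on (cat es) Qa"
    by (rule inj_on_inverseI[where g="ptl (length es)"]) (simp add: ptl_cat)
  have "inner2 ?P (Spath s r es x) y = infsum (\<lambda>\<gamma>. Spath s r es x \<gamma> * cnj (y \<gamma>)) (cat es ` Qa)"
    unfolding inner2_def
  proof (rule infsum_cong_neutral)
    fix \<gamma> assume g: "\<gamma> \<in> ?P - cat es ` Qa"
    show "Spath s r es x \<gamma> * cnj (y \<gamma>) = 0"
    proof (cases "take (length es) (snd \<gamma>) = es")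
      case True
      have c1: "cat es (ptl (length es) \<gamma>) = \<gamma>" by (rule cat_ptl[OF True])
      have c2: "ptl (length es) \<gamma> \<in> Qa"
        using g ptl_path[of \<gamma> s r] c1 by (auto simp: Qa_def)
      have "cat es (ptl (length es) \<gamma>) \<in> cat es ` Qa" using c2 by (rule imageI)
      then have "\<gamma> \<in> cat es ` Qa" unfolding c1 .
      then show ?thesis using g by blast
    next
      case False
      then show ?thesis using es by (simp add: Spath_eq)
    qed
  qed (auto simp: Qa_def)
  also have "\<dots> = infsum ((\<lambda>\<gamma>. Spath s r es x \<gamma> * cnj (y \<gamma>)) \<circ> cat es) Qa"
    by (rule infsum_reindex[OF injc])
  also have "\<dots> = infsum (\<lambda>b. x b * cnj (Sad s r es y b)) ?P"
  proof (rule infsum_cong_neutral)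
    fix b assume "b \<in> ?P - Qa"
    then show "x b * cnj (Sad s r es y b) = 0" by (auto simp: Qa_def Sad_def)
  next
    fix b assume "b \<in> Qa \<inter> ?P"
    then show "((\<lambda>\<gamma>. Spath s r es x \<gamma> * cnj (y \<gamma>)) \<circ> cat es) b = x b * cnj (Sad s r es y b)"
      using es by (auto simp: Qa_def Sad_def Spath_eq ptl_cat) (simp add: cat_def)
  qed (auto simp: Qa_def)
  finally show ?thesis unfolding inner2_def .
qed

lemma compact_op_cong:
  assumes "\<And>x. x \<in> ell2 P \<Longrightarrow> T1 x = T2 x"
  shows "compact_op P T1 \<longleftrightarrow> compact_op P T2"
  unfolding compact_op_def using assms by simp




theorem mainTheorem5:
  fixes s r :: "'e::finite \<Rightarrow> 'v::finite"
    and Zm :: "nat \<Rightarrow> ('v,'e) gpath \<Rightarrow> ('v,'e) gpath \<Rightarrow> complex"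
    and p :: nat
  assumes "no_sinks s"
    and "weight_seq s r Zm"
    and "p \<ge> 1"
  shows "(condA s r Zm p \<longleftrightarrow>
            (\<forall>\<alpha>\<in>paths_len s r p.
               commutes_mod_compact (fock_paths s r) (Spath s r (snd \<alpha>)) (Zop s r Zm)))
       \<and> (condA s r Zm p \<longrightarrow>
            (\<forall>\<alpha>\<in>paths_len s r p.
               (\<exists>T'. is_adj (fock_paths s r) (Spath s r (snd \<alpha>)) T') \<and>
               (\<forall>T'. is_adj (fock_paths s r) (Spath s r (snd \<alpha>)) T' \<longrightarrow>
                  commutes_mod_compact (fock_paths s r) T' (Zop s r Zm))))"
proof -
  have ws: "weight_seq s r Zm" by (rule assms(2))
  have p1: "p \<ge> 1" by (rule assms(3))
  let ?P = "fock_paths s r"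
  let ?lvl = "\<lambda>a::('v,'e) gpath. length (snd a)"
  define c where "c k = fin_opnorm (paths_len s r (k + p)) (Mk s r p Zm k)" for k
  have cA: "condA s r Zm p \<longleftrightarrow> c \<longlonglongrightarrow> 0" unfolding condA_def c_def Mk_def by simp
  have fin: "\<And>m. finite (lev ?P ?lvl m)" by (simp add: lev_paths fin_paths)
  have esne: "snd \<alpha> \<noteq> []" "length (snd \<alpha>) = p" if "\<alpha> \<in> paths_len s r p" for \<alpha>
    using that p1 by (auto simp: paths_len_def)
  have cnn: "c k \<ge> 0" for k unfolding c_def by (rule fin_opnorm_nonneg[OF fin_paths])
  have injm: "inj_on (\<lambda>m. m - p) {p..}" by (auto simp: inj_on_def)
  have injp: "inj_on (\<lambda>m. m + p) {0..}" by (auto simp: inj_on_def)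

  have Dk: "commutes_mod_compact ?P (Spath s r (snd \<alpha>)) (Zop s r Zm) \<longleftrightarrow>
      compact_op ?P (kop ?P ?lvl (\<lambda>m. m - p) p (KD s r Zm (snd \<alpha>)))"
    if a: "\<alpha> \<in> paths_len s r p" for \<alpha>
    unfolding commutes_mod_compact_def D_kop[OF ws esne(1)[OF a]] esne(2)[OF a] ..

  have partA: "commutes_mod_compact ?P (Spath s r (snd \<alpha>)) (Zop s r Zm)"
    if lim: "c \<longlonglongrightarrow> 0" and a: "\<alpha> \<in> paths_len s r p" for \<alpha>
  proof -
    have "compact_op ?P (kop ?P ?lvl (\<lambda>m. m - p) p (KD s r Zm (snd \<alpha>)))"
    proof (rule kop_compact[OF fin injm])
      show "nsq (lev ?P ?lvl m) (kop ?P ?lvl (\<lambda>m. m - p) p (KD s r Zm (snd \<alpha>)) x)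
          \<le> (c (m - p))\<^sup>2 * nsq (lev ?P ?lvl (m - p)) x" if "m \<ge> p" for x m
        using bnd_D[OF ws esne(1)[OF a] esne(2)[OF a, symmetric] that, of x] unfolding c_def .
      show "(\<lambda>m. c (m - p)) \<longlonglongrightarrow> 0"
        by (rule LIMSEQ_offset[where k=p]) (simp add: lim)
    qed
    then show ?thesis using Dk[OF a] by simp
  qed

  have partB: "c \<longlonglongrightarrow> 0"
    if H: "\<forall>\<alpha>\<in>paths_len s r p. commutes_mod_compact ?P (Spath s r (snd \<alpha>)) (Zop s r Zm)"
  proof -
    have small: "\<exists>N. \<forall>m\<ge>N. \<forall>x. nsq (lev ?P ?lvl m) (kop ?P ?lvl (\<lambda>m. m - p) p (KD s r Zm (snd \<alpha>)) x)
                  \<le> \<delta>\<^sup>2 * nsq (lev ?P ?lvl (m - p)) x"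
      if a: "\<alpha> \<in> paths_len s r p" and d: "\<delta> > 0" for \<alpha> \<delta>
      by (rule kop_small[OF fin injm _ d]) (use H a Dk[OF a] in blast)
    show ?thesis unfolding LIMSEQ_iff
    proof (intro allI impI)
      fix rr :: real assume rr: "rr > 0"
      define Np where "Np = card (paths_len s r p)"
      define \<delta> where "\<delta> = rr / (2 * (real Np + 1))"
      have d0: "\<delta> > 0" unfolding \<delta>_def using rr by simp
      have "\<forall>\<alpha>\<in>paths_len s r p. \<exists>N. \<forall>m\<ge>N. \<forall>x.
             nsq (paths_len s r m) (kop ?P ?lvl (\<lambda>m. m - p) p (KD s r Zm (snd \<alpha>)) x)
              \<le> \<delta>\<^sup>2 * nsq (paths_len s r (m - p)) x"
        using small[OF _ d0] by (simp add: lev_paths)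
      then obtain Nf where Nf: "\<And>\<alpha> m x. \<alpha> \<in> paths_len s r p \<Longrightarrow> m \<ge> Nf \<alpha> \<Longrightarrow>
             nsq (paths_len s r m) (kop ?P ?lvl (\<lambda>m. m - p) p (KD s r Zm (snd \<alpha>)) x)
              \<le> \<delta>\<^sup>2 * nsq (paths_len s r (m - p)) x"
        by metis
      define no where "no = (\<Sum>\<alpha>\<in>paths_len s r p. Nf \<alpha>)"
      have "norm (c n - 0) < rr" if n: "n \<ge> no" for n
      proof -
        let ?S = "paths_len s r (n + p)"
        let ?M = "Mk s r p Zm n"
        have key: "nsq ?S (matop ?S ?M y) \<le> (real Np * \<delta>)\<^sup>2 * nsq ?S y" for y
        proof -
          define Pa where "Pa \<alpha> = (\<lambda>\<beta>. if take p (snd \<beta>) = snd \<alpha> then y \<beta> else 0)" for \<alpha> :: "('v,'e) gpath"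
          have per: "sqrt (nsq ?S (matop ?S ?M (Pa \<alpha>))) \<le> \<delta> * sqrt (nsq ?S y)"
            if a: "\<alpha> \<in> paths_len s r p" for \<alpha>
          proof -
            define es where "es = snd \<alpha>"
            have es1: "es \<noteq> []" and es2: "p = length es" using esne[OF a] by (auto simp: es_def)
            define x where "x = Sad s r es (Pa \<alpha>)"
            have Nn: "Nf \<alpha> \<le> n + p"
            proof -
              have "Nf \<alpha> \<le> no" unfolding no_def
                by (rule member_le_sum) (use a fin_paths in auto)
              then show ?thesis using n by simp
            qed
            have "nsq ?S (matop ?S ?M (Pa \<alpha>))
                = nsq ?S (kop ?P ?lvl (\<lambda>m. m - p) p (KD s r Zm es) x)"
            proof (rule nsq_cong)
              fix \<gamma> assume g: "\<gamma> \<in> ?S"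
              have "matop ?S ?M (Pa \<alpha>) \<gamma> = matop ?S ?M (Spath s r es x) \<gamma>"
                unfolding matop_def x_def Pa_def
                using Spath_Sad_P[OF es1 es2, of _ s r n y] es_def
                by (auto intro!: sum.cong)
              also have "\<dots> = Spath s r es (Zop s r Zm x) \<gamma> - Zop s r Zm (Spath s r es x) \<gamma>"
                by (rule D1[OF ws es1 es2 g fin_paths fin_paths, symmetric])
              also have "\<dots> = kop ?P ?lvl (\<lambda>m. m - p) p (KD s r Zm es) x \<gamma>"
                using fun_cong[OF fun_cong[OF D_kop[OF ws es1], of x], of \<gamma>] es2 by simp
              finally show "matop ?S ?M (Pa \<alpha>) \<gamma> = kop ?P ?lvl (\<lambda>m. m - p) p (KD s r Zm es) x \<gamma>" .
            qed
            also have "\<dots> \<le> \<delta>\<^sup>2 * nsq (paths_len s r n) x"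
              using Nf[OF a Nn, of x] unfolding es_def by simp
            also have "\<dots> \<le> \<delta>\<^sup>2 * nsq ?S (Pa \<alpha>)"
              by (rule mult_left_mono) (use nsq_Sad[OF fin_paths fin_paths, of s r n es "Pa \<alpha>"] es2 x_def in auto)
            also have "\<dots> \<le> \<delta>\<^sup>2 * nsq ?S y"
              by (rule mult_left_mono) (auto simp: nsq_def Pa_def intro!: sum_mono)
            finally have "nsq ?S (matop ?S ?M (Pa \<alpha>)) \<le> \<delta>\<^sup>2 * nsq ?S y" .
            then have "sqrt (nsq ?S (matop ?S ?M (Pa \<alpha>))) \<le> sqrt (\<delta>\<^sup>2 * nsq ?S y)"
              by (rule real_sqrt_le_mono)
            also have "\<dots> = \<delta> * sqrt (nsq ?S y)" using d0 by (simp add: real_sqrt_mult)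
            finally show ?thesis .
          qed
          have "sqrt (nsq ?S (matop ?S ?M y))
              = sqrt (nsq ?S (\<lambda>\<gamma>. \<Sum>\<alpha>\<in>paths_len s r p. matop ?S ?M (Pa \<alpha>) \<gamma>))"
          proof -
            have "matop ?S ?M y = (\<lambda>\<gamma>. \<Sum>\<alpha>\<in>paths_len s r p. matop ?S ?M (Pa \<alpha>) \<gamma>)"
              unfolding Pa_def by (rule ext) (rule matop_decomp[OF p1])
            then show ?thesis by simp
          qed
          also have "\<dots> \<le> (\<Sum>\<alpha>\<in>paths_len s r p. sqrt (nsq ?S (matop ?S ?M (Pa \<alpha>))))"
            by (rule nsq_sum_triangle[OF fin_paths])
          also have "\<dots> \<le> (\<Sum>\<alpha>\<in>paths_len s r p. \<delta> * sqrt (nsq ?S y))"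
            by (rule sum_mono) (rule per)
          also have "\<dots> = real Np * \<delta> * sqrt (nsq ?S y)" by (simp add: Np_def)
          finally have sq: "sqrt (nsq ?S (matop ?S ?M y)) \<le> real Np * \<delta> * sqrt (nsq ?S y)" .
          have "nsq ?S (matop ?S ?M y) = (sqrt (nsq ?S (matop ?S ?M y)))\<^sup>2"
            using nsq_nonneg[of ?S "matop ?S ?M y"] by simp
          also have "\<dots> \<le> (real Np * \<delta> * sqrt (nsq ?S y))\<^sup>2"
            by (rule power_mono[OF sq]) (simp add: nsq_nonneg)
          also have "\<dots> = (real Np * \<delta>)\<^sup>2 * nsq ?S y"
            using nsq_nonneg[of ?S y] by (simp add: power_mult_distrib)
          finally show ?thesis .
        qed
        have "c n \<le> real Np * \<delta>"
          unfolding c_def by (rule fin_opnorm_le[OF fin_paths _ key]) (use d0 in simp)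
        also have "\<dots> < rr"
        proof -
          have "real Np * \<delta> = rr * (real Np / (2 * (real Np + 1)))" unfolding \<delta>_def by simp
          also have "\<dots> < rr * 1"
            by (rule mult_strict_left_mono) (use rr in auto)
          finally show ?thesis by simp
        qed
        finally show ?thesis using cnn[of n] by simp
      qed
      then show "\<exists>no. \<forall>n\<ge>no. norm (c n - 0) < rr" by blast
    qed
  qed

  have partC: "(\<exists>T'. is_adj ?P (Spath s r (snd \<alpha>)) T') \<and>
               (\<forall>T'. is_adj ?P (Spath s r (snd \<alpha>)) T' \<longrightarrow> commutes_mod_compact ?P T' (Zop s r Zm))"
    if lim: "c \<longlonglongrightarrow> 0" and a: "\<alpha> \<in> paths_len s r p" for \<alpha>
  proof -
    define es where "es = snd \<alpha>"
    have es1: "es \<noteq> []" and es2: "p = length es" using esne[OF a] by (auto simp: es_def)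
    have adjS: "is_adj ?P (Spath s r es) (Sad s r es)"
      unfolding is_adj_def using Sad_ell2 adj_Sad[OF es1] by blast
    have "\<forall>T'. is_adj ?P (Spath s r es) T' \<longrightarrow> commutes_mod_compact ?P T' (Zop s r Zm)"
    proof (intro allI impI)
      fix T' assume adj: "is_adj ?P (Spath s r es) T'"
      have eqT: "T' y = Sad s r es y" if y: "y \<in> ell2 ?P" for y
      proof
        fix \<beta>
        show "T' y \<beta> = Sad s r es y \<beta>"
        proof (cases "\<beta> \<in> ?P")
          case True
          define e where "e = (\<lambda>a. if a = \<beta> then (1::complex) else 0)"
          have e: "e \<in> ell2 ?P"
            by (rule ell2_finite_supp[of "{\<beta>}"]) (use True in \<open>auto simp: e_def\<close>)
          have "inner2 ?P (Spath s r es e) y = inner2 ?P e (T' y)"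
            using adj e y unfolding is_adj_def by blast
          moreover have "inner2 ?P (Spath s r es e) y = inner2 ?P e (Sad s r es y)"
            by (rule adj_Sad[OF es1])
          ultimately have "inner2 ?P e (T' y) = inner2 ?P e (Sad s r es y)" by simp
          then show ?thesis unfolding e_def inner_delta[OF True] by simp
        next
          case False
          have "T' y \<in> ell2 ?P" using adj y unfolding is_adj_def by blast
          then have "T' y \<beta> = 0" using False unfolding ell2_def by blast
          then show ?thesis using False by (simp add: Sad_def)
        qed
      qed
      have "compact_op ?P (kop ?P ?lvl (\<lambda>m. m + p) 0 (KD' s r Zm es))"
      proof (rule kop_compact[OF fin injp])
        show "nsq (lev ?P ?lvl m) (kop ?P ?lvl (\<lambda>m. m + p) 0 (KD' s r Zm es) x)
            \<le> (c m)\<^sup>2 * nsq (lev ?P ?lvl (m + p)) x" if "m \<ge> 0" for x m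
          using bnd_Dp[OF ws es1 es2, of m x] unfolding c_def .
        show "c \<longlonglongrightarrow> 0" by (rule lim)
      qed
      moreover have "(\<lambda>a. T' (Zop s r Zm x) a - Zop s r Zm (T' x) a)
          = kop ?P ?lvl (\<lambda>m. m + p) 0 (KD' s r Zm es) x" if x: "x \<in> ell2 ?P" for x
      proof -
        have "(\<lambda>a. T' (Zop s r Zm x) a - Zop s r Zm (T' x) a)
            = (\<lambda>a. Sad s r es (Zop s r Zm x) a - Zop s r Zm (Sad s r es x) a)"
          using eqT[OF Zop_ell2[OF ws x]] eqT[OF x] by simp
        also have "\<dots> = kop ?P ?lvl (\<lambda>m. m + p) 0 (KD' s r Zm es) x"
          using fun_cong[OF Dp_kop[OF ws es1], of x] es2 by simp
        finally show ?thesis .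
      qed
      ultimately show "commutes_mod_compact ?P T' (Zop s r Zm)"
        unfolding commutes_mod_compact_def
        using compact_op_cong[of ?P "\<lambda>x a. T' (Zop s r Zm x) a - Zop s r Zm (T' x) a"
            "kop ?P ?lvl (\<lambda>m. m + p) 0 (KD' s r Zm es)"] by simp
    qed
    then show ?thesis using adjS unfolding es_def by blast
  qed

  show ?thesis using cA partA partB partC by blast
qed


end
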